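(* Let $\mathcal{R}$ be a commutative ring, $S'\le S$ finite $p$-groups, $\mathcal{F}_1$ a fusion system over $S$, $\mathcal{F}_2,\mathcal{F}_e$ fusion systems over $S'$ with $\mathcal{F}_e\subseteq\mathcal{F}_1\cap\mathcal{F}_2$, $\mathcal{F}=\langle\mathcal{F}_1,\mathcal{F}_2\rangle_S$, $\mathcal{C}$ a family of subgroups of $S$ containing $S'$ and closed under $\mathcal{F}$-conjugation and overgroups, and $M:\mathcal{O}_{\mathcal{C}}(\mathcal{F})^{op}\to\mathcal{R}$-mod a functor. Let $f^*:\operatorname{Nat}_{\mathcal{O}_{\mathcal{C}}(\mathcal{F})}(CX_0,M)\to\operatorname{Nat}_{\mathcal{O}_{\mathcal{C}}(\mathcal{F})}(CX_1,M)$ be precomposition with $f$. Then $\ker(f^* )\cong M^{\mathcal{F}}$ and $\operatorname{coker}(f^* )\cong M^{\mathcal{F}_e}/\big(M^{\mathcal{F}_1}\overline{\iota_{S'}^S}+M^{\mathcal{F}_2}\big)$.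
   Context: For $\mathcal{E}\in\{\mathcal{F}_1,\mathcal{F}_2,\mathcal{F}_e,\mathcal{F}\}$, $M^{\mathcal{E}}:=\varprojlim_{\mathcal{O}_{\mathcal{C}}(\mathcal{E})}(M\downarrow_{\mathcal{O}_{\mathcal{C}}(\mathcal{E})})$, where $\mathcal{O}_{\mathcal{C}}(\mathcal{E})$ is the full subcategory on subgroups in $\mathcal{C}$ of the orbit category of $\mathcal{E}$ (morphisms $\operatorname{Aut}_Q(Q)\backslash\operatorname{Hom}_{\mathcal{E}}(P,Q)$). $M^{\mathcal{F}_e},M^{\mathcal{F}_2}$ are identified with their (injective) projections to $M(S')$, and $M^{\mathcal{F}_1},M^{\mathcal{F}}$ with their projections to $M(S)$; $M^{\mathcal{F}_1}\overline{\iota_{S'}^S}$ denotes the image of $M^{\mathcal{F}_1}$ under $M(\overline{\iota_{S'}^S}):M(S)\to M(S')$, $\overline{\iota_{S'}^S}$ the class of the inclusion. $\operatorname{Rep}_{\mathcal{F}}(P,\mathcal{H})=\operatorname{Hom}_{\mathcal{F}}(P,S_{\mathcal{H}})/\sim$ ($\varphi\sim\psi$ iff $\theta\varphi=\psi$ for an $\mathcal{H}$-isomorphism $\theta$), $CX_0(P)=\mathcal{R}\operatorname{Rep}_{\mathcal{F}}(P,\mathcal{F}_1)\oplus\mathcal{R}\operatorname{Rep}_{\mathcal{F}}(P,\mathcal{F}_2)$, $CX_1(P)=\mathcal{R}\operatorname{Rep}_{\mathcal{F}}(P,\mathcal{F}_e)$ (functorial by precomposition), $f(\lambda[\varphi]_{\mathcal{F}_e})=(-\lambda[\iota_{S'}^S\varphi]_{\mathcal{F}_1},\lambda[\varphi]_{\mathcal{F}_2})$.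 *)

theory Defs
  imports "HOL-Algebra.Algebra"
begin

(* subgroups of G (G plays the role of the ambient group S) are sets of elements;
   morphisms between subgroups are functions extensional on their domain *)

definition conjg :: "('a, 'b) monoid_scheme \<Rightarrow> 'a \<Rightarrow> 'a set \<Rightarrow> 'a \<Rightarrow> 'a" where
  "conjg G g P = restrict (\<lambda>x. g \<otimes>\<^bsub>G\<^esub> x \<otimes>\<^bsub>G\<^esub> inv\<^bsub>G\<^esub> g) P"

definition HomT :: "('a, 'b) monoid_scheme \<Rightarrow> 'a set \<Rightarrow> 'a set \<Rightarrow> 'a set \<Rightarrow> ('a \<Rightarrow> 'a) set" where
  "HomT G T P Q = {conjg G g P | g. g \<in> T \<and> conjg G g P ` P \<subseteq> Q}"

definition InjHom :: "('a, 'b) monoid_scheme \<Rightarrow> 'a set \<Rightarrow> 'a set \<Rightarrow> ('a \<Rightarrow> 'a) set" where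
  "InjHom G P Q = {\<phi> \<in> extensional P. \<phi> \<in> hom (G\<lparr>carrier := P\<rparr>) (G\<lparr>carrier := Q\<rparr>) \<and> inj_on \<phi> P}"

definition subgrps :: "('a, 'b) monoid_scheme \<Rightarrow> 'a set \<Rightarrow> 'a set set" where
  "subgrps G T = {P. subgroup P G \<and> P \<subseteq> T}"

definition comp_on :: "'a set \<Rightarrow> ('a \<Rightarrow> 'a) \<Rightarrow> ('a \<Rightarrow> 'a) \<Rightarrow> ('a \<Rightarrow> 'a)" where
  "comp_on P \<psi> \<phi> = restrict (\<psi> \<circ> \<phi>) P"

definition fusion_system ::
  "('a, 'b) monoid_scheme \<Rightarrow> 'a set \<Rightarrow> ('a set \<Rightarrow> 'a set \<Rightarrow> ('a \<Rightarrow> 'a) set) \<Rightarrow> bool" where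
  "fusion_system G T F \<longleftrightarrow>
     subgroup T G \<and>
     (\<forall>P Q. (P \<in> subgrps G T \<and> Q \<in> subgrps G T \<longrightarrow> HomT G T P Q \<subseteq> F P Q \<and> F P Q \<subseteq> InjHom G P Q) \<and>
            (\<not> (P \<in> subgrps G T \<and> Q \<in> subgrps G T) \<longrightarrow> F P Q = {})) \<and>
     (\<forall>P Q R \<phi> \<psi>. \<phi> \<in> F P Q \<longrightarrow> \<psi> \<in> F Q R \<longrightarrow> comp_on P \<psi> \<phi> \<in> F P R) \<and>
     (\<forall>P Q \<phi>. \<phi> \<in> F P Q \<longrightarrow> \<phi> \<in> F P (\<phi> ` P) \<and> restrict (inv_into P \<phi>) (\<phi> ` P) \<in> F (\<phi> ` P) P)"

definition subsystem :: "('a set \<Rightarrow> 'a set \<Rightarrow> ('a \<Rightarrow> 'a) set) \<Rightarrow> ('a set \<Rightarrow> 'a set \<Rightarrow> ('a \<Rightarrow> 'a) set) \<Rightarrow> bool" where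
  "subsystem E F \<longleftrightarrow> (\<forall>P Q. E P Q \<subseteq> F P Q)"

definition generated_fs ::
  "('a, 'b) monoid_scheme \<Rightarrow> ('a set \<Rightarrow> 'a set \<Rightarrow> ('a \<Rightarrow> 'a) set) \<Rightarrow> ('a set \<Rightarrow> 'a set \<Rightarrow> ('a \<Rightarrow> 'a) set)
    \<Rightarrow> ('a set \<Rightarrow> 'a set \<Rightarrow> ('a \<Rightarrow> 'a) set)" where
  "generated_fs G F1 F2 = (\<lambda>P Q. \<Inter>{H P Q | H. fusion_system G (carrier G) H \<and> subsystem F1 H \<and> subsystem F2 H})"

definition p_group :: "('a, 'b) monoid_scheme \<Rightarrow> nat \<Rightarrow> 'a set \<Rightarrow> bool" where
  "p_group G p P \<longleftrightarrow> finite P \<and> (\<exists>n. card P = p ^ n)"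

(* The morphism of O(F) represented by \<phi> : P \<rightarrow> Q, i.e. its class in Aut_Q(Q)\Hom_F(P,Q) *)
definition orb_cls :: "('a, 'b) monoid_scheme \<Rightarrow> 'a set \<Rightarrow> 'a set \<Rightarrow> ('a \<Rightarrow> 'a) \<Rightarrow> ('a \<Rightarrow> 'a) set" where
  "orb_cls G P Q \<phi> = (\<lambda>q. comp_on P (conjg G q Q) \<phi>) ` Q"

definition orb_hom :: "('a, 'b) monoid_scheme \<Rightarrow> ('a set \<Rightarrow> 'a set \<Rightarrow> ('a \<Rightarrow> 'a) set) \<Rightarrow> 'a set \<Rightarrow> 'a set
    \<Rightarrow> ('a \<Rightarrow> 'a) set set" where
  "orb_hom G F P Q = orb_cls G P Q ` F P Q"

definition linear_map :: "('r, 'c) ring_scheme \<Rightarrow> ('r, 'm) module \<Rightarrow> ('r, 'n) module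
    \<Rightarrow> ('m \<Rightarrow> 'n) \<Rightarrow> bool" where
  "linear_map R A B h \<longleftrightarrow> h \<in> carrier A \<rightarrow> carrier B \<and>
     (\<forall>x\<in>carrier A. \<forall>y\<in>carrier A. h (x \<oplus>\<^bsub>A\<^esub> y) = h x \<oplus>\<^bsub>B\<^esub> h y) \<and>
     (\<forall>r\<in>carrier R. \<forall>x\<in>carrier A. h (r \<odot>\<^bsub>A\<^esub> x) = r \<odot>\<^bsub>B\<^esub> h x)"

definition mod_iso :: "('r, 'c) ring_scheme \<Rightarrow> ('r, 'm) module \<Rightarrow> ('r, 'n) module \<Rightarrow> bool" where
  "mod_iso R A B \<longleftrightarrow> (\<exists>h. linear_map R A B h \<and> bij_betw h (carrier A) (carrier B))"

definition quot_mod :: "('r, 'm) module \<Rightarrow> 'm set \<Rightarrow> ('r, 'm set) module" where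
  "quot_mod A N = (undefined::(_, _) module)\<lparr>carrier := a_rcosets\<^bsub>A\<^esub> N,
      zero := N, add := set_add A,
      smult := (\<lambda>c Y. \<Union>((\<lambda>x. a_r_coset A N (c \<odot>\<^bsub>A\<^esub> x)) ` Y)) \<rparr>"

definition submod :: "('r, 'm) module \<Rightarrow> 'm set \<Rightarrow> ('r, 'm) module" where
  "submod A0 Y = A0\<lparr>carrier := Y\<rparr>"

definition free_mod :: "('r, 'c) ring_scheme \<Rightarrow> 'x set \<Rightarrow> ('r, 'x \<Rightarrow> 'r) module" where
  "free_mod R Bs = (undefined::(_, _) module)\<lparr>carrier := {a. (\<forall>x\<in>Bs. a x \<in> carrier R) \<and> (\<forall>x. x \<notin> Bs \<longrightarrow> a x = \<zero>\<^bsub>R\<^esub>)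
                                   \<and> finite {x. a x \<noteq> \<zero>\<^bsub>R\<^esub>}},
      zero := (\<lambda>x. \<zero>\<^bsub>R\<^esub>), add := (\<lambda>a b x. a x \<oplus>\<^bsub>R\<^esub> b x),
      smult := (\<lambda>r a x. if x \<in> Bs then r \<otimes>\<^bsub>R\<^esub> a x else \<zero>\<^bsub>R\<^esub>) \<rparr>"

definition basis_vec :: "('r, 'c) ring_scheme \<Rightarrow> 'x \<Rightarrow> 'x \<Rightarrow> 'r" where
  "basis_vec R x = (\<lambda>y. if y = x then \<one>\<^bsub>R\<^esub> else \<zero>\<^bsub>R\<^esub>)"

definition free_map :: "('r, 'c) ring_scheme \<Rightarrow> 'x set \<Rightarrow> ('x \<Rightarrow> 'y) \<Rightarrow> ('x \<Rightarrow> 'r) \<Rightarrow> ('y \<Rightarrow> 'r)" where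
  "free_map R Bs g a = (\<lambda>y. finsum R a {x \<in> Bs. a x \<noteq> \<zero>\<^bsub>R\<^esub> \<and> g x = y})"

(* M : objects P \<mapsto> module M P; Mmap P Q \<rho> : M Q \<rightarrow> M P for a morphism \<rho> : P \<rightarrow> Q of O_C(F) *)
definition orbit_functor ::
  "('a, 'b) monoid_scheme \<Rightarrow> ('a set \<Rightarrow> 'a set \<Rightarrow> ('a \<Rightarrow> 'a) set) \<Rightarrow> 'a set set \<Rightarrow> ('r, 'c) ring_scheme
   \<Rightarrow> ('a set \<Rightarrow> ('r, 'm) module) \<Rightarrow> ('a set \<Rightarrow> 'a set \<Rightarrow> ('a \<Rightarrow> 'a) set \<Rightarrow> 'm \<Rightarrow> 'm) \<Rightarrow> bool" where
  "orbit_functor G F C R M Mmap \<longleftrightarrow>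
     (\<forall>P\<in>C. module R (M P)) \<and>
     (\<forall>P\<in>C. \<forall>Q\<in>C. \<forall>\<rho>\<in>orb_hom G F P Q. linear_map R (M Q) (M P) (Mmap P Q \<rho>)) \<and>
     (\<forall>P\<in>C. \<forall>x\<in>carrier (M P). Mmap P P (orb_cls G P P (restrict id P)) x = x) \<and>
     (\<forall>P\<in>C. \<forall>Q\<in>C. \<forall>R'\<in>C. \<forall>\<phi>\<in>F P Q. \<forall>\<psi>\<in>F Q R'. \<forall>x\<in>carrier (M R').
        Mmap P R' (orb_cls G P R' (comp_on P \<psi> \<phi>)) x
          = Mmap P Q (orb_cls G P Q \<phi>) (Mmap Q R' (orb_cls G Q R' \<psi>) x))"

(* M^E (E a fusion system over T, T \<in> C): inverse limit of M restricted to O_C(E),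
   i.e. compatible families (x_P)_{P \<in> C, P \<le> T}, identified with its projection to M(T) *)
definition fixed_pts ::
  "('a, 'b) monoid_scheme \<Rightarrow> 'a set set \<Rightarrow> ('a set \<Rightarrow> ('r, 'm) module)
   \<Rightarrow> ('a set \<Rightarrow> 'a set \<Rightarrow> ('a \<Rightarrow> 'a) set \<Rightarrow> 'm \<Rightarrow> 'm)
   \<Rightarrow> ('a set \<Rightarrow> 'a set \<Rightarrow> ('a \<Rightarrow> 'a) set) \<Rightarrow> 'a set \<Rightarrow> 'm set" where
  "fixed_pts G C M Mmap E T = {y T | y.
      (\<forall>P\<in>C. P \<subseteq> T \<longrightarrow> y P \<in> carrier (M P)) \<and>
      (\<forall>P\<in>C. \<forall>Q\<in>C. P \<subseteq> T \<longrightarrow> Q \<subseteq> T \<longrightarrow> (\<forall>\<rho>\<in>orb_hom G E P Q. Mmap P Q \<rho> (y Q) = y P))}"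

(* Rep_F(P,H) for H a fusion system over T_H: Hom_F(P,T_H) modulo post-composition with H-isomorphisms *)
definition rep_cls :: "('a set \<Rightarrow> 'a set \<Rightarrow> ('a \<Rightarrow> 'a) set) \<Rightarrow> ('a set \<Rightarrow> 'a set \<Rightarrow> ('a \<Rightarrow> 'a) set) \<Rightarrow> 'a set
    \<Rightarrow> 'a set \<Rightarrow> ('a \<Rightarrow> 'a) \<Rightarrow> ('a \<Rightarrow> 'a) set" where
  "rep_cls F H TH P \<phi> = {\<psi> \<in> F P TH. \<exists>\<theta> \<in> H (\<phi> ` P) (\<psi> ` P).
       bij_betw \<theta> (\<phi> ` P) (\<psi> ` P) \<and> \<psi> = comp_on P \<theta> \<phi>}"

definition Rep :: "('a set \<Rightarrow> 'a set \<Rightarrow> ('a \<Rightarrow> 'a) set) \<Rightarrow> ('a set \<Rightarrow> 'a set \<Rightarrow> ('a \<Rightarrow> 'a) set) \<Rightarrow> 'a set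
    \<Rightarrow> 'a set \<Rightarrow> ('a \<Rightarrow> 'a) set set" where
  "Rep F H TH P = rep_cls F H TH P ` F P TH"

(* CX_1(P) = R Rep_F(P, Fe) *)
definition CX1_basis where
  "CX1_basis F Fe S' P = Rep F Fe S' P"

(* CX_0(P) = R Rep_F(P,F1) \<oplus> R Rep_F(P,F2), as the free module on the disjoint union *)
definition CX0_basis where
  "CX0_basis F F1 F2 S S' P = Rep F F1 S P <+> Rep F F2 S' P"

definition rep_pre :: "('a set \<Rightarrow> 'a set \<Rightarrow> ('a \<Rightarrow> 'a) set) \<Rightarrow> ('a set \<Rightarrow> 'a set \<Rightarrow> ('a \<Rightarrow> 'a) set) \<Rightarrow> 'a set
    \<Rightarrow> 'a set \<Rightarrow> ('a \<Rightarrow> 'a) \<Rightarrow> ('a \<Rightarrow> 'a) set \<Rightarrow> ('a \<Rightarrow> 'a) set" where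
  "rep_pre F H TH P \<rho> c = rep_cls F H TH P (comp_on P (SOME \<phi>. \<phi> \<in> c) \<rho>)"

definition CX1_map where
  "CX1_map R F Fe S' P Q \<rho> = free_map R (CX1_basis F Fe S' Q) (rep_pre F Fe S' P \<rho>)"

definition CX0_map where
  "CX0_map R F F1 F2 S S' P Q \<rho> = free_map R (CX0_basis F F1 F2 S S' Q)
      (map_sum (rep_pre F F1 S P \<rho>) (rep_pre F F2 S' P \<rho>))"

definition nat_trans ::
  "('a, 'b) monoid_scheme \<Rightarrow> ('a set \<Rightarrow> 'a set \<Rightarrow> ('a \<Rightarrow> 'a) set) \<Rightarrow> 'a set set \<Rightarrow> ('r, 'c) ring_scheme
   \<Rightarrow> ('a set \<Rightarrow> 'x set) \<Rightarrow> ('a set \<Rightarrow> 'a set \<Rightarrow> ('a \<Rightarrow> 'a) \<Rightarrow> ('x \<Rightarrow> 'r) \<Rightarrow> ('x \<Rightarrow> 'r))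
   \<Rightarrow> ('a set \<Rightarrow> ('r, 'm) module) \<Rightarrow> ('a set \<Rightarrow> 'a set \<Rightarrow> ('a \<Rightarrow> 'a) set \<Rightarrow> 'm \<Rightarrow> 'm)
   \<Rightarrow> ('a set \<Rightarrow> ('x \<Rightarrow> 'r) \<Rightarrow> 'm) set" where
  "nat_trans G F C R B Bmap M Mmap = {\<eta>.
     \<eta> \<in> extensional C \<and>
     (\<forall>P\<in>C. \<eta> P \<in> extensional (carrier (free_mod R (B P))) \<and>
             linear_map R (free_mod R (B P)) (M P) (\<eta> P)) \<and>
     (\<forall>P\<in>C. \<forall>Q\<in>C. \<forall>\<rho>\<in>F P Q. \<forall>a\<in>carrier (free_mod R (B Q)).
        \<eta> P (Bmap P Q \<rho> a) = Mmap P Q (orb_cls G P Q \<rho>) (\<eta> Q a))}"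

definition nat_mod ::
  "('a, 'b) monoid_scheme \<Rightarrow> ('a set \<Rightarrow> 'a set \<Rightarrow> ('a \<Rightarrow> 'a) set) \<Rightarrow> 'a set set \<Rightarrow> ('r, 'c) ring_scheme
   \<Rightarrow> ('a set \<Rightarrow> 'x set) \<Rightarrow> ('a set \<Rightarrow> 'a set \<Rightarrow> ('a \<Rightarrow> 'a) \<Rightarrow> ('x \<Rightarrow> 'r) \<Rightarrow> ('x \<Rightarrow> 'r))
   \<Rightarrow> ('a set \<Rightarrow> ('r, 'm) module) \<Rightarrow> ('a set \<Rightarrow> 'a set \<Rightarrow> ('a \<Rightarrow> 'a) set \<Rightarrow> 'm \<Rightarrow> 'm)
   \<Rightarrow> ('r, 'a set \<Rightarrow> ('x \<Rightarrow> 'r) \<Rightarrow> 'm) module" where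
  "nat_mod G F C R B Bmap M Mmap = (undefined::(_, _) module)\<lparr>carrier := nat_trans G F C R B Bmap M Mmap,
     zero := (\<lambda>P\<in>C. \<lambda>a\<in>carrier (free_mod R (B P)). \<zero>\<^bsub>M P\<^esub>),
     add := (\<lambda>\<eta> \<mu>. \<lambda>P\<in>C. \<lambda>a\<in>carrier (free_mod R (B P)). \<eta> P a \<oplus>\<^bsub>M P\<^esub> \<mu> P a),
     smult := (\<lambda>r \<eta>. \<lambda>P\<in>C. \<lambda>a\<in>carrier (free_mod R (B P)). r \<odot>\<^bsub>M P\<^esub> \<eta> P a) \<rparr>"

(* f_P : CX_1(P) \<rightarrow> CX_0(P),  \<lambda>[\<phi>]_{Fe} \<mapsto> (-\<lambda>[\<iota> \<phi>]_{F1}, \<lambda>[\<phi>]_{F2}), extended linearly *)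
definition f_map where
  "f_map R F F1 F2 Fe S S' P a = (\<lambda>z. case z of
       Inl c \<Rightarrow> \<ominus>\<^bsub>R\<^esub> finsum R a {d \<in> CX1_basis F Fe S' P. a d \<noteq> \<zero>\<^bsub>R\<^esub> \<and> rep_cls F F1 S P (SOME \<phi>. \<phi> \<in> d) = c}
     | Inr c \<Rightarrow> finsum R a {d \<in> CX1_basis F Fe S' P. a d \<noteq> \<zero>\<^bsub>R\<^esub> \<and> rep_cls F F2 S' P (SOME \<phi>. \<phi> \<in> d) = c})"

definition fstar where
  "fstar R F F1 F2 Fe S S' C \<eta> = (\<lambda>P\<in>C. \<lambda>a\<in>carrier (free_mod R (CX1_basis F Fe S' P)).
       \<eta> P (f_map R F F1 F2 Fe S S' P a))"

end

theory Submission
  imports Defs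
begin

section \<open>Linear maps\<close>

lemma linear_mapD:
  assumes "linear_map R A B h"
  shows "\<And>x. x \<in> carrier A \<Longrightarrow> h x \<in> carrier B"
    and "\<And>x y. x \<in> carrier A \<Longrightarrow> y \<in> carrier A \<Longrightarrow> h (x \<oplus>\<^bsub>A\<^esub> y) = h x \<oplus>\<^bsub>B\<^esub> h y"
    and "\<And>r x. r \<in> carrier R \<Longrightarrow> x \<in> carrier A \<Longrightarrow> h (r \<odot>\<^bsub>A\<^esub> x) = r \<odot>\<^bsub>B\<^esub> h x"
  using assms unfolding linear_map_def by auto

lemma linear_map_comp:
  assumes "linear_map R A B h" "linear_map R B D k"
  shows "linear_map R A D (\<lambda>x. k (h x))"
  using assms unfolding linear_map_def by (auto simp: Pi_def)

lemma linear_map_cong: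
  assumes "module R A" "linear_map R A B h" "\<And>x. x \<in> carrier A \<Longrightarrow> h x = k x"
  shows "linear_map R A B k"
proof -
  interpret A: module R A by fact
  show ?thesis using assms(2,3) unfolding linear_map_def by (auto simp: Pi_def)
qed

lemma linear_map_minus:
  assumes "module R A" "module R B" "linear_map R A B h" "x \<in> carrier A"
  shows "h (\<ominus>\<^bsub>A\<^esub> x) = \<ominus>\<^bsub>B\<^esub> h x"
proof -
  interpret A: module R A by fact
  interpret B: module R B by fact
  have "\<ominus>\<^bsub>A\<^esub> x = (\<ominus>\<^bsub>R\<^esub> \<one>\<^bsub>R\<^esub>) \<odot>\<^bsub>A\<^esub> x"
    using A.smult_l_minus[of "\<one>\<^bsub>R\<^esub>" x] assms(4) by simp
  then have "h (\<ominus>\<^bsub>A\<^esub> x) = (\<ominus>\<^bsub>R\<^esub> \<one>\<^bsub>R\<^esub>) \<odot>\<^bsub>B\<^esub> h x"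
    using linear_mapD(3)[OF assms(3)] assms(4) by simp
  also have "\<dots> = \<ominus>\<^bsub>B\<^esub> h x"
    using B.smult_l_minus[of "\<one>\<^bsub>R\<^esub>" "h x"] linear_mapD(1)[OF assms(3) assms(4)] by simp
  finally show ?thesis .
qed

lemma linear_map_zero:
  assumes "module R A" "module R B" "linear_map R A B h"
  shows "h \<zero>\<^bsub>A\<^esub> = \<zero>\<^bsub>B\<^esub>"
proof -
  interpret A: module R A by fact
  interpret B: module R B by fact
  have "h (\<zero>\<^bsub>A\<^esub> \<oplus>\<^bsub>A\<^esub> \<zero>\<^bsub>A\<^esub>) = h \<zero>\<^bsub>A\<^esub> \<oplus>\<^bsub>B\<^esub> h \<zero>\<^bsub>A\<^esub>"
    by (rule linear_mapD(2)[OF assms(3) A.zero_closed A.zero_closed])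
  then show ?thesis using linear_mapD(1)[OF assms(3)]
    by (metis A.l_zero A.zero_closed B.l_zero B.add.right_cancel B.zero_closed)
qed

lemma linear_map_finsum:
  assumes "module R A" "module R B" "linear_map R A B h" "finite I" "f \<in> I \<rightarrow> carrier A"
  shows "h (finsum A f I) = finsum B (\<lambda>i. h (f i)) I"
  using assms(4,5)
proof (induct I rule: finite_induct)
  case empty
  interpret A: module R A by fact
  interpret B: module R B by fact
  show ?case using linear_map_zero[OF assms(1-3)] by simp
next
  case (insert i I)
  interpret A: module R A by fact
  interpret B: module R B by fact
  have fI: "f \<in> I \<rightarrow> carrier A" "f i \<in> carrier A" using insert by auto
  have hI: "(\<lambda>i. h (f i)) \<in> I \<rightarrow> carrier B" "h (f i) \<in> carrier B"
    using fI linear_mapD(1)[OF assms(3)] by auto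
  have "finsum A f (insert i I) = f i \<oplus>\<^bsub>A\<^esub> finsum A f I"
    using A.finsum_insert[OF insert(1,2) fI(1) fI(2)] .
  then have "h (finsum A f (insert i I)) = h (f i) \<oplus>\<^bsub>B\<^esub> h (finsum A f I)"
    using linear_mapD(2)[OF assms(3)] fI A.finsum_closed by simp
  also have "\<dots> = finsum B (\<lambda>i. h (f i)) (insert i I)"
    using insert(3)[OF fI(1)] B.finsum_insert[OF insert(1,2) hI(1) hI(2)] by simp
  finally show ?case .
qed

lemma module_minus_eq_zero:
  assumes "module R A" "x \<in> carrier A" "y \<in> carrier A" "\<ominus>\<^bsub>A\<^esub> x \<oplus>\<^bsub>A\<^esub> y = \<zero>\<^bsub>A\<^esub>"
  shows "x = y"
proof -
  interpret A: module R A by fact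
  show ?thesis using assms(2-4)
    by (metis A.add.inv_closed A.l_neg A.minus_minus A.minus_unique A.r_neg)
qed

section \<open>Free modules\<close>

lemma free_mod_carrier:
  "a \<in> carrier (free_mod R B) \<longleftrightarrow> (\<forall>x\<in>B. a x \<in> carrier R) \<and> (\<forall>x. x \<notin> B \<longrightarrow> a x = \<zero>\<^bsub>R\<^esub>)
      \<and> finite {x. a x \<noteq> \<zero>\<^bsub>R\<^esub>}"
  by (simp add: free_mod_def)

lemma free_mod_add: "a \<oplus>\<^bsub>free_mod R B\<^esub> b = (\<lambda>x. a x \<oplus>\<^bsub>R\<^esub> b x)"
  by (simp add: free_mod_def)

lemma free_mod_smult: "r \<odot>\<^bsub>free_mod R B\<^esub> a = (\<lambda>x. if x \<in> B then r \<otimes>\<^bsub>R\<^esub> a x else \<zero>\<^bsub>R\<^esub>)"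
  by (simp add: free_mod_def)

lemma free_mod_zero: "\<zero>\<^bsub>free_mod R B\<^esub> = (\<lambda>x. \<zero>\<^bsub>R\<^esub>)"
  by (simp add: free_mod_def)

lemma basis_vec_carrier:
  assumes "ring R" "c \<in> B"
  shows "basis_vec R c \<in> carrier (free_mod R B)"
proof -
  interpret ring R by fact
  have "{x. basis_vec R c x \<noteq> \<zero>\<^bsub>R\<^esub>} \<subseteq> {c}" by (auto simp: basis_vec_def)
  then have "finite {x. basis_vec R c x \<noteq> \<zero>\<^bsub>R\<^esub>}" by (rule finite_subset) simp
  then show ?thesis using assms(2) unfolding free_mod_carrier by (auto simp: basis_vec_def)
qed

lemma free_mod_add_closed:
  assumes "ring R" "a \<in> carrier (free_mod R B)" "b \<in> carrier (free_mod R B)"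
  shows "a \<oplus>\<^bsub>free_mod R B\<^esub> b \<in> carrier (free_mod R B)"
proof -
  interpret ring R by fact
  have "{x. a x \<oplus>\<^bsub>R\<^esub> b x \<noteq> \<zero>\<^bsub>R\<^esub>} \<subseteq> {x. a x \<noteq> \<zero>\<^bsub>R\<^esub>} \<union> {x. b x \<noteq> \<zero>\<^bsub>R\<^esub>}" by auto
  moreover have "finite ({x. a x \<noteq> \<zero>\<^bsub>R\<^esub>} \<union> {x. b x \<noteq> \<zero>\<^bsub>R\<^esub>})" using assms(2,3) by (simp add: free_mod_carrier)
  ultimately have "finite {x. a x \<oplus>\<^bsub>R\<^esub> b x \<noteq> \<zero>\<^bsub>R\<^esub>}" by (rule finite_subset)
  then show ?thesis using assms(2,3) unfolding free_mod_carrier free_mod_add by auto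
qed

lemma free_mod_smult_closed:
  assumes "ring R" "r \<in> carrier R" "a \<in> carrier (free_mod R B)"
  shows "r \<odot>\<^bsub>free_mod R B\<^esub> a \<in> carrier (free_mod R B)"
proof -
  interpret ring R by fact
  have "{x. (if x \<in> B then r \<otimes>\<^bsub>R\<^esub> a x else \<zero>\<^bsub>R\<^esub>) \<noteq> \<zero>\<^bsub>R\<^esub>} \<subseteq> {x. a x \<noteq> \<zero>\<^bsub>R\<^esub>}"
    using assms(2,3) by (auto simp: free_mod_carrier)
  moreover have "finite {x. a x \<noteq> \<zero>\<^bsub>R\<^esub>}" using assms(3) by (simp add: free_mod_carrier)
  ultimately have "finite {x. (if x \<in> B then r \<otimes>\<^bsub>R\<^esub> a x else \<zero>\<^bsub>R\<^esub>) \<noteq> \<zero>\<^bsub>R\<^esub>}"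
    by (rule finite_subset)
  then show ?thesis using assms(2,3) unfolding free_mod_carrier free_mod_smult by auto
qed

definition restr_fm :: "('r, 'c) ring_scheme \<Rightarrow> ('x \<Rightarrow> 'r) \<Rightarrow> 'x set \<Rightarrow> 'x \<Rightarrow> 'r" where
  "restr_fm R a D = (\<lambda>x. if x \<in> D then a x else \<zero>\<^bsub>R\<^esub>)"

lemma free_decomp:
  assumes R: "cring R" and N: "module R N" and h: "linear_map R (free_mod R B) N h"
    and fin: "finite B" and a: "a \<in> carrier (free_mod R B)"
  shows "h a = finsum N (\<lambda>c. a c \<odot>\<^bsub>N\<^esub> h (basis_vec R c)) B"
proof -
  interpret R: cring R by fact
  interpret N: module R N by fact
  have aR: "\<And>x. x \<in> B \<Longrightarrow> a x \<in> carrier R" and a0: "\<And>x. x \<notin> B \<Longrightarrow> a x = \<zero>\<^bsub>R\<^esub>"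
    using a by (auto simp: free_mod_carrier)
  have eC: "\<And>c. c \<in> B \<Longrightarrow> h (basis_vec R c) \<in> carrier N"
    by (intro linear_mapD(1)[OF h] basis_vec_carrier[OF R.ring_axioms])
  have rC: "restr_fm R a D \<in> carrier (free_mod R B)" if DB: "D \<subseteq> B" for D
  proof -
    have sub: "{x. restr_fm R a D x \<noteq> \<zero>\<^bsub>R\<^esub>} \<subseteq> {x. a x \<noteq> \<zero>\<^bsub>R\<^esub>}" by (auto simp: restr_fm_def)
    have "finite {x. a x \<noteq> \<zero>\<^bsub>R\<^esub>}" using a by (simp add: free_mod_carrier)
    then have fin: "finite {x. restr_fm R a D x \<noteq> \<zero>\<^bsub>R\<^esub>}" using sub by (rule finite_subset[rotated])
    show "restr_fm R a D \<in> carrier (free_mod R B)"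
      unfolding free_mod_carrier using fin aR a0 DB by (auto simp: restr_fm_def)
  qed
  have main: "finite D \<Longrightarrow> D \<subseteq> B \<Longrightarrow> h (restr_fm R a D) = finsum N (\<lambda>c. a c \<odot>\<^bsub>N\<^esub> h (basis_vec R c)) D" for D
  proof (induct D rule: finite_induct)
    case empty
    have "restr_fm R a {} = \<zero>\<^bsub>R\<^esub> \<odot>\<^bsub>free_mod R B\<^esub> a"
      using aR by (auto simp: restr_fm_def free_mod_smult)
    then have "h (restr_fm R a {}) = \<zero>\<^bsub>R\<^esub> \<odot>\<^bsub>N\<^esub> h a"
      using linear_mapD(3)[OF h R.zero_closed a] by simp
    then show ?case
      using linear_mapD(1)[OF h a] by simp
  next
    case (insert c D)
    note fD = insert(1) and cD = insert(2)
    have cB: "c \<in> B" and DB: "D \<subseteq> B" using insert(4) by auto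
    note IH = insert(3)
    have eq: "restr_fm R a (insert c D) = restr_fm R a D \<oplus>\<^bsub>free_mod R B\<^esub> (a c \<odot>\<^bsub>free_mod R B\<^esub> basis_vec R c)"
    proof (rule ext)
      fix x
      show "restr_fm R a (insert c D) x = (restr_fm R a D \<oplus>\<^bsub>free_mod R B\<^esub> (a c \<odot>\<^bsub>free_mod R B\<^esub> basis_vec R c)) x"
        unfolding free_mod_smult free_mod_add restr_fm_def basis_vec_def
        using aR[OF cB] cB cD DB aR by (cases "x = c") auto
    qed
    have ecC: "a c \<odot>\<^bsub>free_mod R B\<^esub> basis_vec R c \<in> carrier (free_mod R B)"
      by (rule free_mod_smult_closed[OF R.ring_axioms aR[OF cB] basis_vec_carrier[OF R.ring_axioms cB]])
    have "h (restr_fm R a (insert c D)) = h (restr_fm R a D) \<oplus>\<^bsub>N\<^esub> h (a c \<odot>\<^bsub>free_mod R B\<^esub> basis_vec R c)"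
      unfolding eq by (rule linear_mapD(2)[OF h rC[OF DB] ecC])
    also have "h (a c \<odot>\<^bsub>free_mod R B\<^esub> basis_vec R c) = a c \<odot>\<^bsub>N\<^esub> h (basis_vec R c)"
      by (rule linear_mapD(3)[OF h aR[OF cB] basis_vec_carrier[OF R.ring_axioms cB]])
    also have "h (restr_fm R a D) = finsum N (\<lambda>c. a c \<odot>\<^bsub>N\<^esub> h (basis_vec R c)) D"
      by (rule IH[OF DB])
    finally have st: "h (restr_fm R a (insert c D)) = finsum N (\<lambda>c. a c \<odot>\<^bsub>N\<^esub> h (basis_vec R c)) D \<oplus>\<^bsub>N\<^esub> a c \<odot>\<^bsub>N\<^esub> h (basis_vec R c)" .
    have fC: "(\<lambda>c. a c \<odot>\<^bsub>N\<^esub> h (basis_vec R c)) \<in> D \<rightarrow> carrier N"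
      using aR eC DB by auto
    have c1: "a c \<odot>\<^bsub>N\<^esub> h (basis_vec R c) \<in> carrier N" using aR[OF cB] eC[OF cB] by simp
    have "finsum N (\<lambda>c. a c \<odot>\<^bsub>N\<^esub> h (basis_vec R c)) D \<oplus>\<^bsub>N\<^esub> a c \<odot>\<^bsub>N\<^esub> h (basis_vec R c)
        = finsum N (\<lambda>c. a c \<odot>\<^bsub>N\<^esub> h (basis_vec R c)) (insert c D)"
      using N.finsum_insert[OF fD cD fC c1] N.a_comm[OF N.finsum_closed[OF fC] c1] by simp
    then show ?case using st by simp
  qed
  have "restr_fm R a B = a" using a0 by (auto simp: restr_fm_def)
  then show ?thesis using main[OF fin] by simp
qed

lemma free_uniq:
  assumes R: "cring R" and N: "module R N" and h: "linear_map R (free_mod R B) N h"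
    and k: "linear_map R (free_mod R B) N k"
    and fin: "finite B" and eq: "\<And>c. c \<in> B \<Longrightarrow> h (basis_vec R c) = k (basis_vec R c)"
    and a: "a \<in> carrier (free_mod R B)"
  shows "h a = k a"
proof -
  interpret N: module R N by fact
  have "finsum N (\<lambda>c. a c \<odot>\<^bsub>N\<^esub> h (basis_vec R c)) B = finsum N (\<lambda>c. a c \<odot>\<^bsub>N\<^esub> k (basis_vec R c)) B"
  proof (rule N.finsum_cong')
    show "(\<lambda>c. a c \<odot>\<^bsub>N\<^esub> k (basis_vec R c)) \<in> B \<rightarrow> carrier N"
    proof
      fix c assume c: "c \<in> B"
      have "k (basis_vec R c) \<in> carrier N"
        by (intro linear_mapD(1)[OF k] basis_vec_carrier[OF cring.axioms(1)[OF R] c])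
      moreover have "a c \<in> carrier R" using a c by (simp add: free_mod_carrier)
      ultimately show "a c \<odot>\<^bsub>N\<^esub> k (basis_vec R c) \<in> carrier N" by simp
    qed
  qed (use eq in auto)
  then show ?thesis using free_decomp[OF R N h fin a] free_decomp[OF R N k fin a] by simp
qed

lemma fm_alt:
  assumes R: "ring R" and fin: "finite Bs" and a: "a \<in> carrier (free_mod R Bs)"
  shows "free_map R Bs g a y = finsum R a {x\<in>Bs. g x = y}"
proof -
  interpret R: ring R by fact
  show ?thesis unfolding free_map_def
  proof (rule R.add.finprod_mono_neutral_cong_left)
    show "finite {x \<in> Bs. g x = y}" using fin by simp
    show "a \<in> {x \<in> Bs. g x = y} \<rightarrow> carrier R" using a by (auto simp: free_mod_carrier)
  qed auto
qed

lemma fm_carrier: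
  assumes R: "ring R" and fin: "finite Bs" and g: "g \<in> Bs \<rightarrow> B'" and a: "a \<in> carrier (free_mod R Bs)"
  shows "free_map R Bs g a \<in> carrier (free_mod R B')"
proof -
  interpret R: ring R by fact
  have aC: "a \<in> {x \<in> Bs. g x = y} \<rightarrow> carrier R" for y using a by (auto simp: free_mod_carrier)
  have 1: "\<forall>y\<in>B'. free_map R Bs g a y \<in> carrier R"
  proof
    fix y show "free_map R Bs g a y \<in> carrier R"
      unfolding fm_alt[OF R fin a] by (rule R.finsum_closed[OF aC])
  qed
  have 2: "free_map R Bs g a y = \<zero>\<^bsub>R\<^esub>" if "y \<notin> B'" for y
  proof -
    have e: "{x\<in>Bs. g x = y} = {}" using g that by auto
    show ?thesis unfolding fm_alt[OF R fin a] e by simp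
  qed
  have "{y. free_map R Bs g a y \<noteq> \<zero>\<^bsub>R\<^esub>} \<subseteq> g ` Bs"
  proof
    fix y assume "y \<in> {y. free_map R Bs g a y \<noteq> \<zero>\<^bsub>R\<^esub>}"
    then have ne: "free_map R Bs g a y \<noteq> \<zero>\<^bsub>R\<^esub>" by simp
    have "{x\<in>Bs. g x = y} \<noteq> {}"
    proof
      assume e: "{x\<in>Bs. g x = y} = {}"
      have "free_map R Bs g a y = \<zero>\<^bsub>R\<^esub>" unfolding fm_alt[OF R fin a] e by simp
      with ne show False by simp
    qed
    then show "y \<in> g ` Bs" by auto
  qed
  then have 3: "finite {y. free_map R Bs g a y \<noteq> \<zero>\<^bsub>R\<^esub>}"
    using fin by (meson finite_imageI finite_subset)
  show ?thesis using 1 2 3 unfolding free_mod_carrier by blast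
qed

lemma fm_add:
  assumes R: "ring R" and fin: "finite Bs" and a: "a \<in> carrier (free_mod R Bs)"
    and b: "b \<in> carrier (free_mod R Bs)"
  shows "free_map R Bs g (a \<oplus>\<^bsub>free_mod R Bs\<^esub> b) = free_map R Bs g a \<oplus>\<^bsub>free_mod R B'\<^esub> free_map R Bs g b"
proof (rule ext)
  interpret R: ring R by fact
  fix y
  have ab: "a \<oplus>\<^bsub>free_mod R Bs\<^esub> b \<in> carrier (free_mod R Bs)" by (rule free_mod_add_closed[OF R a b])
  have aC: "a \<in> {x \<in> Bs. g x = y} \<rightarrow> carrier R" using a by (auto simp: free_mod_carrier)
  have bC: "b \<in> {x \<in> Bs. g x = y} \<rightarrow> carrier R" using b by (auto simp: free_mod_carrier)
  show "free_map R Bs g (a \<oplus>\<^bsub>free_mod R Bs\<^esub> b) y = (free_map R Bs g a \<oplus>\<^bsub>free_mod R B'\<^esub> free_map R Bs g b) y"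
    unfolding fm_alt[OF R fin ab] fm_alt[OF R fin a] fm_alt[OF R fin b]
    using R.finsum_addf[OF aC bC] by (simp add: free_mod_add)
qed

lemma fm_smult:
  assumes R: "ring R" and fin: "finite Bs" and g: "g \<in> Bs \<rightarrow> B'" and r: "r \<in> carrier R"
    and a: "a \<in> carrier (free_mod R Bs)"
  shows "free_map R Bs g (r \<odot>\<^bsub>free_mod R Bs\<^esub> a) = r \<odot>\<^bsub>free_mod R B'\<^esub> free_map R Bs g a"
proof (rule ext)
  interpret R: ring R by fact
  fix y
  have ra: "r \<odot>\<^bsub>free_mod R Bs\<^esub> a \<in> carrier (free_mod R Bs)" by (rule free_mod_smult_closed[OF R r a])
  have aC: "a \<in> {x \<in> Bs. g x = y} \<rightarrow> carrier R" using a by (auto simp: free_mod_carrier)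
  show "free_map R Bs g (r \<odot>\<^bsub>free_mod R Bs\<^esub> a) y = (r \<odot>\<^bsub>free_mod R B'\<^esub> free_map R Bs g a) y"
  proof (cases "y \<in> B'")
    case True
    have "finsum R (\<lambda>x. if x \<in> Bs then r \<otimes>\<^bsub>R\<^esub> a x else \<zero>\<^bsub>R\<^esub>) {x \<in> Bs. g x = y}
        = finsum R (\<lambda>x. r \<otimes>\<^bsub>R\<^esub> a x) {x \<in> Bs. g x = y}"
      by (rule R.finsum_cong') (use aC r in auto)
    also have "\<dots> = r \<otimes>\<^bsub>R\<^esub> finsum R a {x \<in> Bs. g x = y}"
      using R.finsum_rdistr[OF _ r aC] fin by simp
    finally show ?thesis
      unfolding fm_alt[OF R fin ra] fm_alt[OF R fin a] using True by (simp add: free_mod_smult)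
  next
    case False
    then have e: "{x\<in>Bs. g x = y} = {}" using g by auto
    show ?thesis unfolding fm_alt[OF R fin ra] e using False by (simp add: free_mod_smult)
  qed
qed

lemma fm_basis:
  assumes R: "ring R" and fin: "finite Bs" and c: "c \<in> Bs"
  shows "free_map R Bs g (basis_vec R c) = basis_vec R (g c)"
proof (rule ext)
  interpret R: ring R by fact
  fix y
  have e: "basis_vec R c \<in> carrier (free_mod R Bs)" by (rule basis_vec_carrier[OF R c])
  show "free_map R Bs g (basis_vec R c) y = basis_vec R (g c) y"
  proof (cases "g c = y")
    case True
    have "finsum R (basis_vec R c) {x \<in> Bs. g x = y} = finsum R (\<lambda>x. if x = c then (\<lambda>_. \<one>\<^bsub>R\<^esub>) x else \<zero>\<^bsub>R\<^esub>) {x \<in> Bs. g x = y}"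
      by (simp add: basis_vec_def)
    also have "\<dots> = \<one>\<^bsub>R\<^esub>"
      by (rule R.add.finprod_singleton_swap) (use True c fin in auto)
    finally show ?thesis unfolding fm_alt[OF R fin e] using True by (simp add: basis_vec_def)
  next
    case False
    have "finsum R (basis_vec R c) {x \<in> Bs. g x = y} = finsum R (\<lambda>x. \<zero>\<^bsub>R\<^esub>) {x \<in> Bs. g x = y}"
      by (rule R.finsum_cong') (use False in \<open>auto simp: basis_vec_def\<close>)
    then show ?thesis unfolding fm_alt[OF R fin e] using False by (simp add: basis_vec_def)
  qed
qed

lemma fm_linear:
  assumes R: "ring R" and fin: "finite Bs" and g: "g \<in> Bs \<rightarrow> B'"
  shows "linear_map R (free_mod R Bs) (free_mod R B') (free_map R Bs g)"
  unfolding linear_map_def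
  using fm_carrier[OF R fin g] fm_add[OF R fin] fm_smult[OF R fin g] by auto

section \<open>Fusion systems: generic facts\<close>

lemma InjHomD:
  assumes "\<phi> \<in> InjHom G P Q"
  shows "\<phi> \<in> extensional P" "\<phi> ` P \<subseteq> Q" "inj_on \<phi> P"
    "\<And>x y. x \<in> P \<Longrightarrow> y \<in> P \<Longrightarrow> \<phi> (x \<otimes>\<^bsub>G\<^esub> y) = \<phi> x \<otimes>\<^bsub>G\<^esub> \<phi> y"
  using assms unfolding InjHom_def hom_def by auto

lemma InjHomI:
  assumes "\<phi> \<in> extensional P" "\<phi> ` P \<subseteq> Q" "inj_on \<phi> P"
    "\<And>x y. x \<in> P \<Longrightarrow> y \<in> P \<Longrightarrow> \<phi> (x \<otimes>\<^bsub>G\<^esub> y) = \<phi> x \<otimes>\<^bsub>G\<^esub> \<phi> y"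
  shows "\<phi> \<in> InjHom G P Q"
  using assms unfolding InjHom_def hom_def by auto

lemma fs_sub:
  assumes "fusion_system G T H" "\<phi> \<in> H P Q"
  shows "P \<in> subgrps G T" "Q \<in> subgrps G T"
  using assms unfolding fusion_system_def by blast+

lemma fs_injhom:
  assumes "fusion_system G T H" "\<phi> \<in> H P Q"
  shows "\<phi> \<in> InjHom G P Q"
  using assms fs_sub[OF assms] unfolding fusion_system_def by blast

lemma fs_comp:
  assumes "fusion_system G T H" "\<phi> \<in> H P Q" "\<psi> \<in> H Q R"
  shows "comp_on P \<psi> \<phi> \<in> H P R"
  using assms unfolding fusion_system_def by blast

lemma fs_img:
  assumes "fusion_system G T H" "\<phi> \<in> H P Q"
  shows "\<phi> \<in> H P (\<phi> ` P)" "\<phi> ` P \<in> subgrps G T"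
    "restrict (inv_into P \<phi>) (\<phi> ` P) \<in> H (\<phi> ` P) P"
proof -
  show 1: "\<phi> \<in> H P (\<phi> ` P)" using assms unfolding fusion_system_def by blast
  show "\<phi> ` P \<in> subgrps G T" using fs_sub(2)[OF assms(1) 1] .
  show "restrict (inv_into P \<phi>) (\<phi> ` P) \<in> H (\<phi> ` P) P" using assms unfolding fusion_system_def by blast
qed

lemma subgrps_sub: "P \<in> subgrps G T \<Longrightarrow> P \<subseteq> T" "P \<in> subgrps G T \<Longrightarrow> subgroup P G"
  unfolding subgrps_def by auto

lemma conjg_one:
  assumes "group G" "P \<subseteq> carrier G"
  shows "conjg G \<one>\<^bsub>G\<^esub> P = restrict id P"
proof -
  interpret group G by fact
  show ?thesis unfolding conjg_def using assms(2) by (intro restrict_ext) auto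
qed

lemma fs_incl:
  fixes G (structure)
  assumes G: "group G" and H: "fusion_system G T H" and PQ: "P \<subseteq> Q"
    and P: "P \<in> subgrps G T" and Q: "Q \<in> subgrps G T"
  shows "restrict id P \<in> H P Q"
proof -
  interpret group G by fact
  have T: "subgroup T G" using H unfolding fusion_system_def by blast
  have Pc: "P \<subseteq> carrier G" using P subgroup.subset unfolding subgrps_def by blast
  have "conjg G \<one> P \<in> HomT G T P Q"
    unfolding HomT_def using conjg_one[OF G Pc] PQ subgroup.one_closed[OF T]
    by (intro CollectI exI[of _ "\<one>"]) auto
  then show ?thesis using H P Q conjg_one[OF G Pc] unfolding fusion_system_def by auto
qed

lemma comp_on_incl_left:
  assumes "\<phi> \<in> extensional P" "\<phi> ` P \<subseteq> Q"
  shows "comp_on P (restrict id Q) \<phi> = \<phi>"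
  unfolding comp_on_def using assms by (intro extensionalityI[OF _ assms(1)]) auto

lemma comp_on_id_right:
  assumes "\<psi> \<in> extensional P"
  shows "comp_on P \<psi> (restrict id P) = \<psi>"
  unfolding comp_on_def using assms by (intro extensionalityI[OF _ assms(1)]) auto

lemma fs_enlarge:
  assumes G: "group G" and H: "fusion_system G T H" and \<phi>: "\<phi> \<in> H P Q" and QQ: "Q \<subseteq> Q'"
    and Q': "Q' \<in> subgrps G T"
  shows "\<phi> \<in> H P Q'"
proof -
  have "restrict id Q \<in> H Q Q'" using fs_incl[OF G H QQ fs_sub(2)[OF H \<phi>] Q'] .
  from fs_comp[OF H \<phi> this] show ?thesis
    using comp_on_incl_left InjHomD(1,2)[OF fs_injhom[OF H \<phi>]] by metis
qed

lemma fs_restrict: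
  assumes G: "group G" and H: "fusion_system G T H" and th: "th \<in> H U Y" and XX: "U' \<subseteq> U"
    and U': "U' \<in> subgrps G T"
  shows "restrict th U' \<in> H U' (th ` U')"
proof -
  have "restrict id U' \<in> H U' U" using fs_incl[OF G H XX U' fs_sub(1)[OF H th]] .
  from fs_comp[OF H this th] have "comp_on U' th (restrict id U') \<in> H U' Y" .
  moreover have "comp_on U' th (restrict id U') = restrict th U'"
    unfolding comp_on_def by auto
  ultimately have "restrict th U' \<in> H U' Y" by simp
  from fs_img(1)[OF H this] have "restrict th U' \<in> H U' (restrict th U' ` U')" .
  moreover have "restrict th U' ` U' = th ` U'" by simp
  ultimately show ?thesis by metis
qed

definition Fmax :: "('a, 'b) monoid_scheme \<Rightarrow> 'a set \<Rightarrow> 'a set \<Rightarrow> ('a \<Rightarrow> 'a) set" where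
  "Fmax G P Q = (if P \<in> subgrps G (carrier G) \<and> Q \<in> subgrps G (carrier G) then InjHom G P Q else {})"

lemma conj_hom:
  fixes G (structure)
  assumes "group G" "g \<in> carrier G" "x \<in> carrier G" "y \<in> carrier G"
  shows "g \<otimes>\<^bsub>G\<^esub> (x \<otimes>\<^bsub>G\<^esub> y) \<otimes>\<^bsub>G\<^esub> inv\<^bsub>G\<^esub> g
      = (g \<otimes>\<^bsub>G\<^esub> x \<otimes>\<^bsub>G\<^esub> inv\<^bsub>G\<^esub> g) \<otimes>\<^bsub>G\<^esub> (g \<otimes>\<^bsub>G\<^esub> y \<otimes>\<^bsub>G\<^esub> inv\<^bsub>G\<^esub> g)"
proof -
  interpret group G by fact
  have "inv g \<otimes> (g \<otimes> (y \<otimes> inv g)) = y \<otimes> inv g"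
    using assms by (simp add: m_assoc[symmetric])
  then show ?thesis using assms by (simp add: m_assoc)
qed

lemma Fmax_fs:
  fixes G (structure)
  assumes G: "group G"
  shows "fusion_system G (carrier G) (Fmax G)"
proof -
  interpret group G by fact
  have sub_c: "P \<subseteq> carrier G" if "P \<in> subgrps G (carrier G)" for P using that subgrps_sub by blast
  have img: "\<phi> ` P \<in> subgrps G (carrier G)" if "P \<in> subgrps G (carrier G)" "Q \<in> subgrps G (carrier G)"
      "\<phi> \<in> InjHom G P Q" for P Q \<phi>
  proof -
    have sP: "subgroup P G" using that(1) subgrps_sub by blast
    have gP: "group (G\<lparr>carrier := P\<rparr>)" by (rule subgroup.subgroup_is_group[OF sP G])
    have "\<phi> \<in> hom (G\<lparr>carrier := P\<rparr>) G"
      using InjHomD[OF that(3)] sub_c[OF that(2)] unfolding hom_def by auto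
    then have "group_hom (G\<lparr>carrier := P\<rparr>) G \<phi>"
      using gP G unfolding group_hom_def group_hom_axioms_def by auto
    from group_hom.img_is_subgroup[OF this] have "subgroup (\<phi> ` P) G" by simp
    then show ?thesis using InjHomD(2)[OF that(3)] sub_c[OF that(2)] unfolding subgrps_def by auto
  qed
  show ?thesis unfolding fusion_system_def
  proof (intro conjI allI impI)
    show "subgroup (carrier G) G" by (rule subgroup_self)
  next
    fix P Q assume PQ: "P \<in> subgrps G (carrier G) \<and> Q \<in> subgrps G (carrier G)"
    show "HomT G (carrier G) P Q \<subseteq> Fmax G P Q"
    proof
      fix \<phi> assume "\<phi> \<in> HomT G (carrier G) P Q"
      then obtain g where g: "g \<in> carrier G" "conjg G g P ` P \<subseteq> Q" and \<phi>: "\<phi> = conjg G g P"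
        unfolding HomT_def by auto
      have Pc: "P \<subseteq> carrier G" using sub_c PQ by blast
      have "\<phi> \<in> InjHom G P Q"
      proof (rule InjHomI)
        show "\<phi> \<in> extensional P" unfolding \<phi> conjg_def by simp
        show "\<phi> ` P \<subseteq> Q" using g \<phi> by simp
        show "inj_on \<phi> P" unfolding inj_on_def
        proof (intro ballI impI)
          fix x y assume xy: "x \<in> P" "y \<in> P" and e: "\<phi> x = \<phi> y"
          then have xc: "x \<in> carrier G" "y \<in> carrier G" using Pc by auto
          from e xy have "g \<otimes> (x \<otimes> inv g) = g \<otimes> (y \<otimes> inv g)"
            unfolding \<phi> conjg_def using xc g by (simp add: m_assoc)
          then show "x = y" using xc g by simp
        qed
        fix x y assume "x \<in> P" "y \<in> P"
        moreover then have "x \<otimes> y \<in> P" using PQ subgrps_sub(2) subgroup.m_closed by metis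
        ultimately show "\<phi> (x \<otimes> y) = \<phi> x \<otimes> \<phi> y"
          unfolding \<phi> conjg_def using conj_hom[OF G g(1)] Pc by auto
      qed
      then show "\<phi> \<in> Fmax G P Q" using PQ unfolding Fmax_def by simp
    qed
    show "Fmax G P Q \<subseteq> InjHom G P Q" using PQ unfolding Fmax_def by simp
  next
    fix P Q :: "'a set" assume "\<not> (P \<in> subgrps G (carrier G) \<and> Q \<in> subgrps G (carrier G))"
    then show "Fmax G P Q = {}" unfolding Fmax_def by auto
  next
    fix P Q R \<phi> \<psi> assume \<phi>: "\<phi> \<in> Fmax G P Q" and \<psi>: "\<psi> \<in> Fmax G Q R"
    then have PQR: "P \<in> subgrps G (carrier G)" "Q \<in> subgrps G (carrier G)" "R \<in> subgrps G (carrier G)"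
      and \<phi>I: "\<phi> \<in> InjHom G P Q" and \<psi>I: "\<psi> \<in> InjHom G Q R"
      unfolding Fmax_def by (auto split: if_splits)
    have "comp_on P \<psi> \<phi> \<in> InjHom G P R"
    proof (rule InjHomI)
      show "comp_on P \<psi> \<phi> \<in> extensional P" unfolding comp_on_def by simp
      show "comp_on P \<psi> \<phi> ` P \<subseteq> R" unfolding comp_on_def using InjHomD(2)[OF \<phi>I] InjHomD(2)[OF \<psi>I] by auto
      show "inj_on (comp_on P \<psi> \<phi>) P" unfolding comp_on_def inj_on_def
        using InjHomD(2,3)[OF \<phi>I] InjHomD(3)[OF \<psi>I] by (auto simp: inj_on_def subset_iff)
      fix x y assume xy: "x \<in> P" "y \<in> P"
      then have "x \<otimes> y \<in> P" using PQR subgrps_sub(2) subgroup.m_closed by metis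
      then show "comp_on P \<psi> \<phi> (x \<otimes> y) = comp_on P \<psi> \<phi> x \<otimes> comp_on P \<psi> \<phi> y"
        unfolding comp_on_def using xy InjHomD(2,4)[OF \<phi>I] InjHomD(4)[OF \<psi>I] by (auto simp: image_subset_iff)
    qed
    then show "comp_on P \<psi> \<phi> \<in> Fmax G P R" using PQR unfolding Fmax_def by simp
  next
    fix P Q \<phi> assume \<phi>: "\<phi> \<in> Fmax G P Q"
    then have PQ: "P \<in> subgrps G (carrier G)" "Q \<in> subgrps G (carrier G)"
      and \<phi>I: "\<phi> \<in> InjHom G P Q" unfolding Fmax_def by (auto split: if_splits)
    have im: "\<phi> ` P \<in> subgrps G (carrier G)" using img[OF PQ \<phi>I] .
    have "\<phi> \<in> InjHom G P (\<phi> ` P)"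
      using InjHomD[OF \<phi>I] by (intro InjHomI) auto
    then show "\<phi> \<in> Fmax G P (\<phi> ` P)" using PQ im unfolding Fmax_def by simp
    have "restrict (inv_into P \<phi>) (\<phi> ` P) \<in> InjHom G (\<phi> ` P) P"
    proof (rule InjHomI)
      show "restrict (inv_into P \<phi>) (\<phi> ` P) \<in> extensional (\<phi> ` P)" by simp
      show "restrict (inv_into P \<phi>) (\<phi> ` P) ` \<phi> ` P \<subseteq> P"
        using InjHomD(3)[OF \<phi>I] by auto
      show "inj_on (restrict (inv_into P \<phi>) (\<phi> ` P)) (\<phi> ` P)"
        using inj_on_inv_into[of "\<phi> ` P" \<phi> P] by (simp add: inj_on_def)
      fix x y assume "x \<in> \<phi> ` P" "y \<in> \<phi> ` P"
      then obtain a b where ab: "a \<in> P" "b \<in> P" "x = \<phi> a" "y = \<phi> b" by auto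
      have abP: "a \<otimes> b \<in> P" using ab PQ subgrps_sub(2) subgroup.m_closed by metis
      have "x \<otimes> y = \<phi> (a \<otimes> b)" using ab InjHomD(4)[OF \<phi>I] by simp
      moreover have "\<phi> (a \<otimes> b) \<in> \<phi> ` P" using abP by simp
      ultimately show "restrict (inv_into P \<phi>) (\<phi> ` P) (x \<otimes> y)
          = restrict (inv_into P \<phi>) (\<phi> ` P) x \<otimes> restrict (inv_into P \<phi>) (\<phi> ` P) y"
        using ab abP InjHomD(3)[OF \<phi>I] by (simp add: inv_into_f_f)
    qed
    then show "restrict (inv_into P \<phi>) (\<phi> ` P) \<in> Fmax G (\<phi> ` P) P" using PQ im unfolding Fmax_def by simp
  qed
qed

locale repctx =
  fixes G :: "('a, 'b) monoid_scheme" and F H :: "'a set \<Rightarrow> 'a set \<Rightarrow> ('a \<Rightarrow> 'a) set" and TH :: "'a set"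
  assumes grp: "group G" and Ffs: "fusion_system G (carrier G) F" and Hfs: "fusion_system G TH H"
    and HF: "subsystem H F"
begin

abbreviation "rc P \<phi> \<equiv> rep_cls F H TH P \<phi>"

lemma HF': "\<phi> \<in> H P Q \<Longrightarrow> \<phi> \<in> F P Q"
  using HF unfolding subsystem_def by blast

lemma TH_sub: "TH \<in> subgrps G (carrier G)"
proof -
  have "subgroup TH G" using Hfs unfolding fusion_system_def by (rule conjunct1)
  then show ?thesis unfolding subgrps_def using subgroup.subset by auto
qed

lemma F_img_TH:
  assumes "\<phi> \<in> F P TH"
  shows "\<phi> ` P \<in> subgrps G TH"
proof -
  have "subgroup (\<phi> ` P) G" using fs_img(2)[OF Ffs assms] subgrps_sub by blast
  moreover have "\<phi> ` P \<subseteq> TH" using InjHomD(2)[OF fs_injhom[OF Ffs assms]] .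
  ultimately show ?thesis unfolding subgrps_def by simp
qed

lemma rc_mem:
  "\<psi> \<in> rc P \<phi> \<longleftrightarrow> \<psi> \<in> F P TH \<and> (\<exists>\<theta>\<in>H (\<phi> ` P) (\<psi> ` P). bij_betw \<theta> (\<phi> ` P) (\<psi> ` P) \<and> \<psi> = comp_on P \<theta> \<phi>)"
  unfolding rep_cls_def by simp

lemma rc_refl:
  assumes \<phi>: "\<phi> \<in> F P TH"
  shows "\<phi> \<in> rc P \<phi>"
proof -
  let ?U = "\<phi> ` P"
  have U: "?U \<in> subgrps G TH" by (rule F_img_TH[OF \<phi>])
  have "restrict id ?U \<in> H ?U ?U" by (rule fs_incl[OF grp Hfs subset_refl U U])
  moreover have "bij_betw (restrict id ?U) ?U ?U"
    using bij_betw_cong[of ?U "restrict id ?U" id ?U] bij_betw_id by simp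
  moreover have "\<phi> = comp_on P (restrict id ?U) \<phi>"
    using comp_on_incl_left[OF InjHomD(1)[OF fs_injhom[OF Ffs \<phi>]] subset_refl] by simp
  ultimately show ?thesis unfolding rc_mem using \<phi> by blast
qed

lemma rc_sym:
  assumes \<phi>: "\<phi> \<in> F P TH" and \<psi>: "\<psi> \<in> rc P \<phi>"
  shows "\<phi> \<in> rc P \<psi>"
proof -
  obtain th where th: "th \<in> H (\<phi> ` P) (\<psi> ` P)" "bij_betw th (\<phi> ` P) (\<psi> ` P)" "\<psi> = comp_on P th \<phi>"
    and \<psi>F: "\<psi> \<in> F P TH"
    using \<psi> unfolding rc_mem by blast
  let ?U = "\<phi> ` P" and ?Y = "\<psi> ` P"
  let ?th' = "restrict (inv_into ?U th) (th ` ?U)"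
  have surj: "th ` ?U = ?Y" using bij_betw_imp_surj_on[OF th(2)] .
  have inj: "inj_on th ?U" using bij_betw_imp_inj_on[OF th(2)] .
  have "?th' \<in> H (th ` ?U) ?U" by (rule fs_img(3)[OF Hfs th(1)])
  then have 1: "?th' \<in> H ?Y ?U" using surj by simp
  have b0: "bij_betw (inv_into ?U th) ?Y ?U" using bij_betw_inv_into[OF th(2)] .
  have eqY: "?th' a = inv_into ?U th a" if "a \<in> ?Y" for a using surj that by simp
  have 2: "bij_betw ?th' ?Y ?U" using bij_betw_cong[of ?Y ?th' "inv_into ?U th" ?U, OF eqY] b0 by simp
  have ext\<phi>: "\<phi> \<in> extensional P" using InjHomD(1)[OF fs_injhom[OF Ffs \<phi>]] .
  have 3: "\<phi> = comp_on P ?th' \<psi>"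
  proof (rule ext)
    fix x show "\<phi> x = comp_on P ?th' \<psi> x"
    proof (cases "x \<in> P")
      case True
      then have "\<psi> x = th (\<phi> x)" using th(3) unfolding comp_on_def by simp
      moreover have "th (\<phi> x) \<in> th ` ?U" using True by simp
      ultimately show ?thesis using True inv_into_f_f[OF inj] unfolding comp_on_def by simp
    next
      case False
      have "\<phi> x = undefined" by (rule extensional_arb[OF ext\<phi> False])
      moreover have "comp_on P ?th' \<psi> x = undefined" unfolding comp_on_def using False by (simp only: restrict_apply if_False)
      ultimately show ?thesis by simp
    qed
  qed
  show ?thesis unfolding rc_mem using 1 2 3 \<phi> by blast
qed

lemma rc_trans:
  assumes \<psi>: "\<psi> \<in> rc P \<phi>" and \<chi>: "\<chi> \<in> rc P \<psi>"
  shows "\<chi> \<in> rc P \<phi>"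
proof -
  obtain t1 where t1: "t1 \<in> H (\<phi> ` P) (\<psi> ` P)" "bij_betw t1 (\<phi> ` P) (\<psi> ` P)" "\<psi> = comp_on P t1 \<phi>"
    using \<psi> unfolding rc_mem by blast
  obtain t2 where t2: "t2 \<in> H (\<psi> ` P) (\<chi> ` P)" "bij_betw t2 (\<psi> ` P) (\<chi> ` P)" "\<chi> = comp_on P t2 \<psi>"
    and \<chi>F: "\<chi> \<in> F P TH"
    using \<chi> unfolding rc_mem by blast
  have 1: "comp_on (\<phi> ` P) t2 t1 \<in> H (\<phi> ` P) (\<chi> ` P)" by (rule fs_comp[OF Hfs t1(1) t2(1)])
  have "bij_betw (t2 \<circ> t1) (\<phi> ` P) (\<chi> ` P)" by (rule bij_betw_trans[OF t1(2) t2(2)])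
  moreover have "comp_on (\<phi> ` P) t2 t1 a = (t2 \<circ> t1) a" if "a \<in> \<phi> ` P" for a
    using that unfolding comp_on_def by simp
  ultimately have 2: "bij_betw (comp_on (\<phi> ` P) t2 t1) (\<phi> ` P) (\<chi> ` P)"
    using bij_betw_cong[of "\<phi> ` P" "comp_on (\<phi> ` P) t2 t1" "t2 \<circ> t1" "\<chi> ` P"] by simp
  have 3: "\<chi> = comp_on P (comp_on (\<phi> ` P) t2 t1) \<phi>"
    using t1(3) t2(3) unfolding comp_on_def by (auto simp: fun_eq_iff)
  show ?thesis unfolding rc_mem using 1 2 3 \<chi>F by blast
qed

lemma rc_eq:
  assumes \<phi>: "\<phi> \<in> F P TH" and \<psi>: "\<psi> \<in> rc P \<phi>"
  shows "rc P \<psi> = rc P \<phi>"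
proof
  show "rc P \<psi> \<subseteq> rc P \<phi>" using rc_trans[OF \<psi>] by blast
  show "rc P \<phi> \<subseteq> rc P \<psi>" using rc_trans[OF rc_sym[OF \<phi> \<psi>]] by blast
qed

lemma rc_F: "\<psi> \<in> rc P \<phi> \<Longrightarrow> \<psi> \<in> F P TH"
  unfolding rc_mem by blast

lemma rc_some:
  assumes "\<phi> \<in> F P TH"
  shows "(SOME \<psi>. \<psi> \<in> rc P \<phi>) \<in> rc P \<phi>"
  by (rule someI[of "\<lambda>\<psi>. \<psi> \<in> rc P \<phi>", OF rc_refl[OF assms]])

lemma rc_in_Rep: "\<phi> \<in> F P TH \<Longrightarrow> rc P \<phi> \<in> Rep F H TH P"
  unfolding Rep_def by simp

lemma Rep_some:
  assumes "c \<in> Rep F H TH P"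
  shows "(SOME \<phi>. \<phi> \<in> c) \<in> c" "(SOME \<phi>. \<phi> \<in> c) \<in> F P TH" "c = rc P (SOME \<phi>. \<phi> \<in> c)"
proof -
  obtain \<phi> where \<phi>: "\<phi> \<in> F P TH" "c = rc P \<phi>" using assms unfolding Rep_def by blast
  show 1: "(SOME \<phi>. \<phi> \<in> c) \<in> c" using rc_some[OF \<phi>(1)] \<phi>(2) by simp
  show "(SOME \<phi>. \<phi> \<in> c) \<in> F P TH" using 1 \<phi>(2) rc_F by blast
  show "c = rc P (SOME \<phi>. \<phi> \<in> c)" using rc_eq[OF \<phi>(1)] 1 \<phi>(2) by simp
qed

lemma rep_pre_rc:
  assumes \<phi>: "\<phi> \<in> F Q TH" and \<rho>: "\<rho> \<in> F P Q"
  shows "rep_pre F H TH P \<rho> (rc Q \<phi>) = rc P (comp_on P \<phi> \<rho>)"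
proof -
  define \<psi> where "\<psi> = (SOME \<psi>. \<psi> \<in> rc Q \<phi>)"
  have \<psi>: "\<psi> \<in> rc Q \<phi>" unfolding \<psi>_def by (rule rc_some[OF \<phi>])
  obtain th where th: "th \<in> H (\<phi> ` Q) (\<psi> ` Q)" "bij_betw th (\<phi> ` Q) (\<psi> ` Q)" "\<psi> = comp_on Q th \<phi>"
    and \<psi>F: "\<psi> \<in> F Q TH"
    using \<psi> unfolding rc_mem by blast
  define \<chi>0 where "\<chi>0 = comp_on P \<phi> \<rho>"
  define \<chi>1 where "\<chi>1 = comp_on P \<psi> \<rho>"
  have \<chi>0F: "\<chi>0 \<in> F P TH" unfolding \<chi>0_def by (rule fs_comp[OF Ffs \<rho> \<phi>])
  have \<chi>1F: "\<chi>1 \<in> F P TH" unfolding \<chi>1_def by (rule fs_comp[OF Ffs \<rho> \<psi>F])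
  have \<rho>Q: "\<rho> ` P \<subseteq> Q" using InjHomD(2)[OF fs_injhom[OF Ffs \<rho>]] .
  have sub: "\<chi>0 ` P \<subseteq> \<phi> ` Q" unfolding \<chi>0_def comp_on_def using \<rho>Q by auto
  have U': "\<chi>0 ` P \<in> subgrps G TH" by (rule F_img_TH[OF \<chi>0F])
  have 1: "restrict th (\<chi>0 ` P) \<in> H (\<chi>0 ` P) (th ` (\<chi>0 ` P))"
    by (rule fs_restrict[OF grp Hfs th(1) sub U'])
  have val: "\<chi>1 x = th (\<chi>0 x)" if "x \<in> P" for x
    using that \<rho>Q th(3) unfolding \<chi>1_def \<chi>0_def comp_on_def by auto
  have img: "\<chi>1 ` P = th ` (\<chi>0 ` P)" using val by (auto simp: image_iff)
  have "inj_on th (\<chi>0 ` P)" using bij_betw_imp_inj_on[OF th(2)] sub inj_on_subset by blast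
  then have 2: "bij_betw (restrict th (\<chi>0 ` P)) (\<chi>0 ` P) (\<chi>1 ` P)"
    unfolding img by (simp add: bij_betw_def inj_on_def)
  have ext1: "\<chi>1 \<in> extensional P" unfolding \<chi>1_def comp_on_def by simp
  have 3: "\<chi>1 = comp_on P (restrict th (\<chi>0 ` P)) \<chi>0"
  proof (rule ext)
    fix x show "\<chi>1 x = comp_on P (restrict th (\<chi>0 ` P)) \<chi>0 x"
    proof (cases "x \<in> P")
      case True
      then show ?thesis using val[OF True] unfolding comp_on_def by simp
    next
      case False
      have "\<chi>1 x = undefined" by (rule extensional_arb[OF ext1 False])
      moreover have "comp_on P (restrict th (\<chi>0 ` P)) \<chi>0 x = undefined"
        unfolding comp_on_def using False by (simp only: restrict_apply if_False)
      ultimately show ?thesis by simp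
    qed
  qed
  have "\<chi>1 \<in> rc P \<chi>0" unfolding rc_mem using 1[folded img] 2 3 \<chi>1F by blast
  then have "rc P \<chi>1 = rc P \<chi>0" by (rule rc_eq[OF \<chi>0F])
  then show ?thesis unfolding rep_pre_def \<psi>_def[symmetric] \<chi>1_def \<chi>0_def by simp
qed

lemma rep_pre_maps:
  assumes \<rho>: "\<rho> \<in> F P Q"
  shows "rep_pre F H TH P \<rho> \<in> Rep F H TH Q \<rightarrow> Rep F H TH P"
proof
  fix c assume c: "c \<in> Rep F H TH Q"
  have "rep_pre F H TH P \<rho> c = rc P (comp_on P (SOME \<phi>. \<phi> \<in> c) \<rho>)"
    using rep_pre_rc[OF Rep_some(2)[OF c] \<rho>] Rep_some(3)[OF c] by simp
  then show "rep_pre F H TH P \<rho> c \<in> Rep F H TH P"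
    using rc_in_Rep[OF fs_comp[OF Ffs \<rho> Rep_some(2)[OF c]]] by simp
qed

lemma idP_H:
  assumes "P \<in> subgrps G TH"
  shows "restrict id P \<in> H P TH"
  using fs_incl[OF grp Hfs subgrps_sub(1)[OF assms] assms] Hfs
  unfolding fusion_system_def subgrps_def using subgroup.subset by blast

lemma rc_H:
  assumes \<phi>: "\<phi> \<in> H P TH"
  shows "rc P \<phi> = rc P (restrict id P)"
proof -
  have P: "P \<in> subgrps G TH" using fs_sub(1)[OF Hfs \<phi>] .
  have idF: "restrict id P \<in> F P TH" using HF'[OF idP_H[OF P]] .
  have ext: "\<phi> \<in> extensional P" using InjHomD(1)[OF fs_injhom[OF Hfs \<phi>]] .
  have "\<phi> \<in> rc P (restrict id P)" unfolding rc_mem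
  proof (intro conjI bexI)
    show "\<phi> \<in> F P TH" using HF'[OF \<phi>] .
    show "\<phi> \<in> H (restrict id P ` P) (\<phi> ` P)" using fs_img(1)[OF Hfs \<phi>] by simp
    show "bij_betw \<phi> (restrict id P ` P) (\<phi> ` P)"
      using InjHomD(3)[OF fs_injhom[OF Hfs \<phi>]] by (simp add: bij_betw_def)
    show "\<phi> = comp_on P \<phi> (restrict id P)" using comp_on_id_right[OF ext] by simp
  qed
  then show ?thesis using rc_eq[OF idF] by simp
qed

lemma Rep_finite:
  assumes fin: "finite (carrier G)"
  shows "finite (Rep F H TH P)"
proof (cases "F P TH = {}")
  case True then show ?thesis unfolding Rep_def by simp
next
  case False
  then obtain \<phi> where "\<phi> \<in> F P TH" by blast
  then have "P \<in> subgrps G (carrier G)" using fs_sub[OF Ffs] by blast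
  then have Pf: "finite P" using finite_subset[OF subgrps_sub(1) fin] by blast
  have Tf: "finite TH" using finite_subset[OF subgrps_sub(1)[OF TH_sub] fin] .
  have "F P TH \<subseteq> PiE P (\<lambda>_. TH)"
  proof
    fix \<psi> assume "\<psi> \<in> F P TH"
    from InjHomD(1,2)[OF fs_injhom[OF Ffs this]] show "\<psi> \<in> PiE P (\<lambda>_. TH)"
      by (auto simp: PiE_def)
  qed
  moreover have "finite (PiE P (\<lambda>_. TH))" using finite_PiE[OF Pf, of "\<lambda>_. TH"] Tf by simp
  ultimately have "finite (F P TH)" by (rule finite_subset)
  then show ?thesis unfolding Rep_def by simp
qed

lemma comp_on_idTH:
  assumes "\<phi> \<in> F P TH"
  shows "comp_on P (restrict id TH) \<phi> = \<phi>"
  using comp_on_incl_left InjHomD(1,2)[OF fs_injhom[OF Ffs assms]] by blast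

lemma idTH_F: "restrict id TH \<in> F TH TH"
  using fs_incl[OF grp Ffs subset_refl TH_sub TH_sub] .

end

lemma rep_cls_mono:
  assumes "subsystem H H'" "F P TH \<subseteq> F P TH'" "\<psi> \<in> rep_cls F H TH P \<phi>"
  shows "\<psi> \<in> rep_cls F H' TH' P \<phi>"
  using assms unfolding rep_cls_def subsystem_def by blast

locale mainctx =
  fixes G :: "'a monoid" and S' :: "'a set" and R :: "'r ring"
    and F1 F2 Fe F :: "'a set \<Rightarrow> 'a set \<Rightarrow> ('a \<Rightarrow> 'a) set"
    and C :: "'a set set"
    and M :: "'a set \<Rightarrow> ('r, 'm) module"
    and Mmap :: "'a set \<Rightarrow> 'a set \<Rightarrow> ('a \<Rightarrow> 'a) set \<Rightarrow> 'm \<Rightarrow> 'm"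
  assumes R: "cring R" and grp: "group G" and fin: "finite (carrier G)"
    and S'sub: "subgroup S' G"
    and F1fs: "fusion_system G (carrier G) F1" and F2fs: "fusion_system G S' F2"
    and Fefs: "fusion_system G S' Fe"
    and Fe1: "subsystem Fe F1" and Fe2: "subsystem Fe F2"
    and F_def: "F = generated_fs G F1 F2"
    and Csub: "C \<subseteq> subgrps G (carrier G)" and S'C: "S' \<in> C"
    and Cconj: "\<forall>P\<in>C. \<forall>\<phi>\<in>F P (carrier G). \<phi> ` P \<in> C"
    and Cover: "\<forall>P\<in>C. \<forall>Q. subgroup Q G \<and> P \<subseteq> Q \<longrightarrow> Q \<in> C"
    and Mf: "orbit_functor G F C R M Mmap"
begin

abbreviation "S \<equiv> carrier G"
abbreviation "Mm P Q \<phi> \<equiv> Mmap P Q (orb_cls G P Q \<phi>)"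
abbreviation "idm P \<equiv> restrict id P"

lemma Rring: "ring R" using R cring.axioms(1) by blast

lemma F_mem: "\<phi> \<in> F P Q \<longleftrightarrow> (\<forall>H. fusion_system G S H \<and> subsystem F1 H \<and> subsystem F2 H \<longrightarrow> \<phi> \<in> H P Q)"
  unfolding F_def generated_fs_def by blast

lemma S'_subgrps: "S' \<in> subgrps G S"
  using S'sub subgroup.subset unfolding subgrps_def by blast

lemma subgrps_S'_S: "P \<in> subgrps G S' \<Longrightarrow> P \<in> subgrps G S"
  using S'_subgrps unfolding subgrps_def by auto

lemma Fmax_in: "fusion_system G S (Fmax G) \<and> subsystem F1 (Fmax G) \<and> subsystem F2 (Fmax G)"
proof (intro conjI)
  show "fusion_system G S (Fmax G)" by (rule Fmax_fs[OF grp])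
  show "subsystem F1 (Fmax G)" unfolding subsystem_def
  proof (intro allI subsetI)
    fix P Q \<phi> assume "\<phi> \<in> F1 P Q"
    then show "\<phi> \<in> Fmax G P Q" using fs_sub[OF F1fs] fs_injhom[OF F1fs] unfolding Fmax_def by auto
  qed
  show "subsystem F2 (Fmax G)" unfolding subsystem_def
  proof (intro allI subsetI)
    fix P Q \<phi> assume "\<phi> \<in> F2 P Q"
    then show "\<phi> \<in> Fmax G P Q" using fs_sub[OF F2fs] fs_injhom[OF F2fs] subgrps_S'_S unfolding Fmax_def by auto
  qed
qed

lemma F_Fmax: "\<phi> \<in> F P Q \<Longrightarrow> \<phi> \<in> Fmax G P Q"
  using F_mem Fmax_in by blast

lemma F1F: "subsystem F1 F" unfolding subsystem_def using F_mem unfolding subsystem_def by blast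
lemma F2F: "subsystem F2 F" unfolding subsystem_def using F_mem unfolding subsystem_def by blast
lemma FeF: "subsystem Fe F" using Fe1 F1F unfolding subsystem_def by blast

lemma Ffs: "fusion_system G S F"
  unfolding fusion_system_def
proof (intro conjI allI impI)
  show "subgroup S G" by (rule group.subgroup_self[OF grp])
next
  fix P Q assume PQ: "P \<in> subgrps G S \<and> Q \<in> subgrps G S"
  show "HomT G S P Q \<subseteq> F P Q"
  proof
    fix \<rho> assume \<rho>: "\<rho> \<in> HomT G S P Q"
    show "\<rho> \<in> F P Q" unfolding F_mem
    proof (intro allI impI)
      fix H assume "fusion_system G S H \<and> subsystem F1 H \<and> subsystem F2 H"
      then have "HomT G S P Q \<subseteq> H P Q" using PQ unfolding fusion_system_def by blast
      then show "\<rho> \<in> H P Q" using \<rho> by blast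
    qed
  qed
  show "F P Q \<subseteq> InjHom G P Q"
  proof
    fix \<phi> assume "\<phi> \<in> F P Q"
    then have "\<phi> \<in> Fmax G P Q" by (rule F_Fmax)
    then show "\<phi> \<in> InjHom G P Q" using PQ unfolding Fmax_def by simp
  qed
next
  fix P Q :: "'a set" assume "\<not> (P \<in> subgrps G S \<and> Q \<in> subgrps G S)"
  then have "Fmax G P Q = {}" unfolding Fmax_def by auto
  then show "F P Q = {}" using F_Fmax by blast
next
  fix P Q R' \<phi> \<psi> assume "\<phi> \<in> F P Q" "\<psi> \<in> F Q R'"
  then show "comp_on P \<psi> \<phi> \<in> F P R'" unfolding F_mem using fs_comp by blast
next
  fix P Q \<phi> assume "\<phi> \<in> F P Q"
  then show "\<phi> \<in> F P (\<phi> ` P)" "restrict (inv_into P \<phi>) (\<phi> ` P) \<in> F (\<phi> ` P) P"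
    unfolding F_mem using fs_img by blast+
qed

lemma rc1: "repctx G F F1 S" unfolding repctx_def using grp Ffs F1fs F1F by blast
lemma rc2: "repctx G F F2 S'" unfolding repctx_def using grp Ffs F2fs F2F by blast
lemma rce: "repctx G F Fe S'" unfolding repctx_def using grp Ffs Fefs FeF by blast

lemma F1F': "\<phi> \<in> F1 P Q \<Longrightarrow> \<phi> \<in> F P Q" using F1F unfolding subsystem_def by blast
lemma F2F': "\<phi> \<in> F2 P Q \<Longrightarrow> \<phi> \<in> F P Q" using F2F unfolding subsystem_def by blast
lemma FeF': "\<phi> \<in> Fe P Q \<Longrightarrow> \<phi> \<in> F P Q" using FeF unfolding subsystem_def by blast

lemma C_sub: "P \<in> C \<Longrightarrow> P \<in> subgrps G S" using Csub by blast

lemma SC: "S \<in> C"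
  using Cover S'C group.subgroup_self[OF grp] subgroup.subset[OF S'sub] by blast

lemma S_subgrps: "S \<in> subgrps G S" using SC C_sub by blast

lemma Cclosed:
  assumes "\<phi> \<in> F P Q" "P \<in> C"
  shows "\<phi> ` P \<in> C" "Q \<in> C"
proof -
  have Q: "Q \<in> subgrps G S" using fs_sub(2)[OF Ffs assms(1)] .
  have "\<phi> \<in> F P S" using fs_enlarge[OF grp Ffs assms(1) subgrps_sub(1)[OF Q] S_subgrps] .
  then show 1: "\<phi> ` P \<in> C" using Cconj assms(2) by blast
  have "\<phi> ` P \<subseteq> Q" using InjHomD(2)[OF fs_injhom[OF Ffs assms(1)]] .
  then show "Q \<in> C" using Cover 1 subgrps_sub(2)[OF Q] by blast
qed

lemma M_mod: "P \<in> C \<Longrightarrow> module R (M P)"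
  using Mf unfolding orbit_functor_def by blast

lemma Mm_lin: "P \<in> C \<Longrightarrow> Q \<in> C \<Longrightarrow> \<phi> \<in> F P Q \<Longrightarrow> linear_map R (M Q) (M P) (Mm P Q \<phi>)"
  using Mf unfolding orbit_functor_def orb_hom_def by blast

lemma Mm_C: "P \<in> C \<Longrightarrow> Q \<in> C \<Longrightarrow> \<phi> \<in> F P Q \<Longrightarrow> x \<in> carrier (M Q) \<Longrightarrow> Mm P Q \<phi> x \<in> carrier (M P)"
  using linear_mapD(1)[OF Mm_lin] by blast

lemma Mm_id: "P \<in> C \<Longrightarrow> x \<in> carrier (M P) \<Longrightarrow> Mm P P (idm P) x = x"
  using Mf unfolding orbit_functor_def by blast

lemma Mm_comp:
  "P \<in> C \<Longrightarrow> Q \<in> C \<Longrightarrow> R' \<in> C \<Longrightarrow> \<phi> \<in> F P Q \<Longrightarrow> \<psi> \<in> F Q R' \<Longrightarrow> x \<in> carrier (M R')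
   \<Longrightarrow> Mm P R' (comp_on P \<psi> \<phi>) x = Mm P Q \<phi> (Mm Q R' \<psi> x)"
  using Mf unfolding orbit_functor_def by blast

section \<open>Compatible families and the generated system\<close>

lemma gen_compat:
  assumes yC: "\<And>P. P \<in> C \<Longrightarrow> y P \<in> carrier (M P)"
    and c1: "\<And>P Q \<phi>. P \<in> C \<Longrightarrow> Q \<in> C \<Longrightarrow> \<phi> \<in> F1 P Q \<Longrightarrow> Mm P Q \<phi> (y Q) = y P"
    and c2: "\<And>P Q \<phi>. P \<in> C \<Longrightarrow> Q \<in> C \<Longrightarrow> \<phi> \<in> F2 P Q \<Longrightarrow> Mm P Q \<phi> (y Q) = y P"
    and \<phi>: "\<phi> \<in> F P Q" and P: "P \<in> C" and Q: "Q \<in> C"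
  shows "Mm P Q \<phi> (y Q) = y P"
proof -
  define Hy where "Hy = (\<lambda>P Q. {\<phi> \<in> F P Q. P \<in> C \<longrightarrow> Q \<in> C \<longrightarrow> Mm P Q \<phi> (y Q) = y P})"
  have HyF: "\<psi> \<in> Hy A B \<Longrightarrow> \<psi> \<in> F A B" for \<psi> A B unfolding Hy_def by simp
  have s1: "subsystem F1 Hy" unfolding subsystem_def Hy_def using c1 F1F' by blast
  have s2: "subsystem F2 Hy" unfolding subsystem_def Hy_def using c2 F2F' by blast
  have img: "\<psi> \<in> Hy A (\<psi> ` A)" if \<psi>: "\<psi> \<in> Hy A B" for \<psi> A B
  proof -
    have \<psi>F: "\<psi> \<in> F A B" using HyF[OF \<psi>] .
    have 1: "\<psi> \<in> F A (\<psi> ` A)" using fs_img(1)[OF Ffs \<psi>F] .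
    have "Mm A (\<psi> ` A) \<psi> (y (\<psi> ` A)) = y A" if A: "A \<in> C"
    proof -
      have UC: "\<psi> ` A \<in> C" and BC: "B \<in> C" using Cclosed[OF \<psi>F A] by auto
      have sub: "\<psi> ` A \<subseteq> B" using InjHomD(2)[OF fs_injhom[OF Ffs \<psi>F]] .
      have inc: "idm (\<psi> ` A) \<in> F1 (\<psi> ` A) B"
        using fs_incl[OF grp F1fs sub C_sub[OF UC] C_sub[OF BC]] .
      have "y (\<psi> ` A) = Mm (\<psi> ` A) B (idm (\<psi> ` A)) (y B)" using c1[OF UC BC inc] by simp
      then have "Mm A (\<psi> ` A) \<psi> (y (\<psi> ` A)) = Mm A B (comp_on A (idm (\<psi> ` A)) \<psi>) (y B)"
        using Mm_comp[OF A UC BC 1 F1F'[OF inc] yC[OF BC]] by simp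
      also have "comp_on A (idm (\<psi> ` A)) \<psi> = \<psi>"
        using comp_on_incl_left InjHomD(1)[OF fs_injhom[OF Ffs \<psi>F]] by blast
      finally show ?thesis using \<psi> A BC unfolding Hy_def by simp
    qed
    then show ?thesis unfolding Hy_def using 1 by simp
  qed
  have Hfs: "fusion_system G S Hy"
    unfolding fusion_system_def
  proof (intro conjI allI impI)
    show "subgroup S G" by (rule group.subgroup_self[OF grp])
  next
    fix A B assume AB: "A \<in> subgrps G S \<and> B \<in> subgrps G S"
    show "HomT G S A B \<subseteq> Hy A B" using s1 F1fs AB unfolding subsystem_def fusion_system_def by blast
    show "Hy A B \<subseteq> InjHom G A B" using HyF fs_injhom[OF Ffs] by blast
  next
    fix A B :: "'a set" assume "\<not> (A \<in> subgrps G S \<and> B \<in> subgrps G S)"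
    then show "Hy A B = {}" using HyF fs_sub[OF Ffs] by blast
  next
    fix A B D \<phi> \<psi> assume \<phi>: "\<phi> \<in> Hy A B" and \<psi>: "\<psi> \<in> Hy B D"
    have \<phi>F: "\<phi> \<in> F A B" and \<psi>F: "\<psi> \<in> F B D" using HyF \<phi> \<psi> by auto
    have "Mm A D (comp_on A \<psi> \<phi>) (y D) = y A" if A: "A \<in> C" and D: "D \<in> C"
    proof -
      have B: "B \<in> C" using Cclosed[OF \<phi>F A] by simp
      have "Mm A D (comp_on A \<psi> \<phi>) (y D) = Mm A B \<phi> (Mm B D \<psi> (y D))"
        by (rule Mm_comp[OF A B D \<phi>F \<psi>F yC[OF D]])
      then show ?thesis using \<phi> \<psi> A B D unfolding Hy_def by simp
    qed
    then show "comp_on A \<psi> \<phi> \<in> Hy A D" unfolding Hy_def using fs_comp[OF Ffs \<phi>F \<psi>F] by simp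
  next
    fix A B \<psi> assume \<psi>: "\<psi> \<in> Hy A B"
    show "\<psi> \<in> Hy A (\<psi> ` A)" by (rule img[OF \<psi>])
    have \<psi>F: "\<psi> \<in> F A B" using HyF[OF \<psi>] .
    let ?t = "restrict (inv_into A \<psi>) (\<psi> ` A)"
    have tF: "?t \<in> F (\<psi> ` A) A" using fs_img(3)[OF Ffs \<psi>F] .
    have 1: "\<psi> \<in> F A (\<psi> ` A)" using fs_img(1)[OF Ffs \<psi>F] .
    have "Mm (\<psi> ` A) A ?t (y A) = y (\<psi> ` A)" if U: "\<psi> ` A \<in> C" and A: "A \<in> C"
    proof -
      have "y A = Mm A (\<psi> ` A) \<psi> (y (\<psi> ` A))" using img[OF \<psi>] A U unfolding Hy_def by simp
      then have "Mm (\<psi> ` A) A ?t (y A) = Mm (\<psi> ` A) (\<psi> ` A) (comp_on (\<psi> ` A) \<psi> ?t) (y (\<psi> ` A))"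
        using Mm_comp[OF U A U tF 1 yC[OF U]] by simp
      also have "comp_on (\<psi> ` A) \<psi> ?t = idm (\<psi> ` A)"
        unfolding comp_on_def by (intro restrict_ext) (simp add: f_inv_into_f)
      finally show ?thesis using Mm_id[OF U yC[OF U]] by (simp only:)
    qed
    then show "?t \<in> Hy (\<psi> ` A) A" unfolding Hy_def using tF by simp
  qed
  have "\<phi> \<in> Hy P Q" using \<phi> Hfs s1 s2 unfolding F_mem by blast
  then show ?thesis using P Q unfolding Hy_def by simp
qed

section \<open>Natural transformations out of Rep-functors\<close>

context
  fixes H TH u
  assumes rH: "repctx G F H TH" and THC: "TH \<in> C"
    and uC0: "\<forall>P\<in>C. \<forall>c\<in>Rep F H TH P. u P c \<in> carrier (M P)"
    and unat0: "\<forall>P\<in>C. \<forall>Q\<in>C. \<forall>\<rho>\<in>F P Q. \<forall>c\<in>Rep F H TH Q.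
                  u P (rep_pre F H TH P \<rho> c) = Mm P Q \<rho> (u Q c)"
begin

lemma uC: "P \<in> C \<Longrightarrow> c \<in> Rep F H TH P \<Longrightarrow> u P c \<in> carrier (M P)"
  using uC0 by blast
lemma unat: "P \<in> C \<Longrightarrow> Q \<in> C \<Longrightarrow> \<rho> \<in> F P Q \<Longrightarrow> c \<in> Rep F H TH Q
                  \<Longrightarrow> u P (rep_pre F H TH P \<rho> c) = Mm P Q \<rho> (u Q c)"
  using unat0 by blast

interpretation r: repctx G F H TH by (rule rH)

lemma GCa:
  assumes P: "P \<in> C" and \<phi>: "\<phi> \<in> F P TH"
  shows "u P (rep_cls F H TH P \<phi>) = Mm P TH \<phi> (u TH (rep_cls F H TH TH (idm TH)))"
proof -
  have "rep_pre F H TH P \<phi> (rep_cls F H TH TH (idm TH)) = rep_cls F H TH P (comp_on P (idm TH) \<phi>)"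
    by (rule r.rep_pre_rc[OF r.idTH_F \<phi>])
  then have "rep_pre F H TH P \<phi> (rep_cls F H TH TH (idm TH)) = rep_cls F H TH P \<phi>"
    using r.comp_on_idTH[OF \<phi>] by simp
  then show ?thesis using unat[OF P THC \<phi> r.rc_in_Rep[OF r.idTH_F]] by simp
qed

lemma GCb:
  assumes P: "P \<in> C" and Q: "Q \<in> C" and \<phi>: "\<phi> \<in> H P Q"
  shows "Mm P Q \<phi> (u Q (rep_cls F H TH Q (idm Q))) = u P (rep_cls F H TH P (idm P))"
proof -
  have \<phi>F: "\<phi> \<in> F P Q" using r.HF'[OF \<phi>] .
  have Qs: "Q \<in> subgrps G TH" using fs_sub(2)[OF r.Hfs \<phi>] .
  have THs: "TH \<in> subgrps G TH"
    using r.TH_sub unfolding subgrps_def by simp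
  have idQ: "idm Q \<in> F Q TH" using r.HF'[OF r.idP_H[OF Qs]] .
  have "rep_pre F H TH P \<phi> (rep_cls F H TH Q (idm Q)) = rep_cls F H TH P (comp_on P (idm Q) \<phi>)"
    by (rule r.rep_pre_rc[OF idQ \<phi>F])
  also have "comp_on P (idm Q) \<phi> = \<phi>"
    using comp_on_incl_left InjHomD(1,2)[OF fs_injhom[OF r.Hfs \<phi>]] by blast
  also have "rep_cls F H TH P \<phi> = rep_cls F H TH P (idm P)"
    by (rule r.rc_H[OF fs_enlarge[OF grp r.Hfs \<phi> subgrps_sub(1)[OF Qs] THs]])
  finally have e: "rep_pre F H TH P \<phi> (rep_cls F H TH Q (idm Q)) = rep_cls F H TH P (idm P)" .
  show ?thesis using unat[OF P Q \<phi>F r.rc_in_Rep[OF idQ]] by (simp only: e)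
qed

lemma GCc: "u TH (rep_cls F H TH TH (idm TH)) \<in> fixed_pts G C M Mmap H TH"
proof -
  define y where "y = (\<lambda>P. u P (rep_cls F H TH P (idm P)))"
  have yC: "y P \<in> carrier (M P)" if "P \<in> C" "P \<subseteq> TH" for P
  proof -
    have "P \<in> subgrps G TH" using C_sub[OF that(1)] that(2) unfolding subgrps_def by simp
    then have "idm P \<in> F P TH" using r.HF'[OF r.idP_H] by blast
    then show ?thesis unfolding y_def using uC[OF that(1) r.rc_in_Rep] by blast
  qed
  have comp: "Mmap P Q \<rho> (y Q) = y P" if P: "P \<in> C" and Q: "Q \<in> C" and \<rho>: "\<rho> \<in> orb_hom G H P Q" for P Q \<rho>
  proof -
    obtain \<phi> where "\<phi> \<in> H P Q" "\<rho> = orb_cls G P Q \<phi>" using \<rho> unfolding orb_hom_def by blast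
    then show ?thesis unfolding y_def using GCb[OF P Q] by simp
  qed
  show ?thesis unfolding fixed_pts_def
    by (rule CollectI, rule exI[of _ y]) (use yC comp in \<open>auto simp: y_def\<close>)
qed

end

context
  fixes H TH x
  assumes rH: "repctx G F H TH" and THC: "TH \<in> C"
    and xfix: "x \<in> fixed_pts G C M Mmap H TH"
begin

interpretation r: repctx G F H TH by (rule rH)

lemma fix_obtain:
  obtains y where "x = y TH" "\<And>P. P \<in> C \<Longrightarrow> P \<subseteq> TH \<Longrightarrow> y P \<in> carrier (M P)"
    "\<And>P Q \<phi>. P \<in> C \<Longrightarrow> Q \<in> C \<Longrightarrow> \<phi> \<in> H P Q \<Longrightarrow> Mm P Q \<phi> (y Q) = y P"
proof -
  obtain y where y: "x = y TH" "\<forall>P\<in>C. P \<subseteq> TH \<longrightarrow> y P \<in> carrier (M P)"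
    "\<forall>P\<in>C. \<forall>Q\<in>C. P \<subseteq> TH \<longrightarrow> Q \<subseteq> TH \<longrightarrow> (\<forall>\<rho>\<in>orb_hom G H P Q. Mmap P Q \<rho> (y Q) = y P)"
    using xfix unfolding fixed_pts_def by blast
  have "Mm P Q \<phi> (y Q) = y P" if "P \<in> C" "Q \<in> C" "\<phi> \<in> H P Q" for P Q \<phi>
  proof -
    have "P \<subseteq> TH" "Q \<subseteq> TH" using fs_sub[OF r.Hfs that(3)] subgrps_sub(1) by blast+
    moreover have "orb_cls G P Q \<phi> \<in> orb_hom G H P Q" unfolding orb_hom_def using that(3) by simp
    ultimately show ?thesis using y(3) that by blast
  qed
  then show ?thesis using that y(1,2) by blast
qed

lemma x_C: "x \<in> carrier (M TH)"
proof -
  obtain y where "x = y TH" "\<And>P. P \<in> C \<Longrightarrow> P \<subseteq> TH \<Longrightarrow> y P \<in> carrier (M P)"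
    using fix_obtain by blast
  then show ?thesis using THC by blast
qed

lemma W0:
  assumes U: "U \<in> C" and \<chi>: "\<chi> \<in> H U TH"
  obtains y where "x = y TH" "Mm U TH \<chi> x = y U" "Mm U TH (idm U) x = y U"
proof -
  obtain y where y: "x = y TH" "\<And>P Q \<phi>. P \<in> C \<Longrightarrow> Q \<in> C \<Longrightarrow> \<phi> \<in> H P Q \<Longrightarrow> Mm P Q \<phi> (y Q) = y P"
    using fix_obtain by blast
  have "U \<in> subgrps G TH" using fs_sub(1)[OF r.Hfs \<chi>] .
  then have "idm U \<in> H U TH" by (rule r.idP_H)
  then show ?thesis using that y U THC \<chi> by simp
qed

lemma Wrc:
  assumes P: "P \<in> C" and \<phi>: "\<phi> \<in> F P TH" and \<psi>: "\<psi> \<in> rep_cls F H TH P \<phi>"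
  shows "Mm P TH \<psi> x = Mm P TH \<phi> x"
proof -
  obtain th where th: "th \<in> H (\<phi> ` P) (\<psi> ` P)" "\<psi> = comp_on P th \<phi>"
    using \<psi> unfolding r.rc_mem by blast
  let ?U = "\<phi> ` P"
  have Us: "?U \<in> subgrps G TH" using r.F_img_TH[OF \<phi>] .
  have THs: "TH \<in> subgrps G TH" using r.TH_sub unfolding subgrps_def by simp
  have \<phi>S: "\<phi> \<in> F P S" using fs_enlarge[OF grp Ffs \<phi> subgrps_sub(1)[OF r.TH_sub] S_subgrps] .
  have UC: "?U \<in> C" using Cconj P \<phi>S by blast
  have \<psi>F: "\<psi> \<in> F P TH" using \<psi> r.rc_F by blast
  have thH: "th \<in> H ?U TH"
    using fs_enlarge[OF grp r.Hfs th(1) _ THs] InjHomD(2)[OF fs_injhom[OF Ffs \<psi>F]] by blast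
  have \<phi>U: "\<phi> \<in> F P ?U" using fs_img(1)[OF Ffs \<phi>] .
  obtain y where y: "x = y TH" "Mm ?U TH th x = y ?U" "Mm ?U TH (idm ?U) x = y ?U"
    using W0[OF UC thH] by blast
  have "Mm P TH \<psi> x = Mm P ?U \<phi> (Mm ?U TH th x)"
    unfolding th(2) by (rule Mm_comp[OF P UC THC \<phi>U r.HF'[OF thH] x_C])
  also have "\<dots> = Mm P ?U \<phi> (Mm ?U TH (idm ?U) x)" using y by simp
  also have "\<dots> = Mm P TH (comp_on P (idm ?U) \<phi>) x"
    by (rule Mm_comp[OF P UC THC \<phi>U r.HF'[OF r.idP_H[OF Us]] x_C, symmetric])
  also have "comp_on P (idm ?U) \<phi> = \<phi>"
    using comp_on_incl_left InjHomD(1)[OF fs_injhom[OF Ffs \<phi>]] by blast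
  finally show ?thesis .
qed

definition vfix :: "'a set \<Rightarrow> ('a \<Rightarrow> 'a) set \<Rightarrow> 'm" where
  "vfix P c = Mm P TH (SOME \<phi>. \<phi> \<in> c) x"

lemma Wv:
  assumes P: "P \<in> C" and \<phi>: "\<phi> \<in> F P TH"
  shows "vfix P (rep_cls F H TH P \<phi>) = Mm P TH \<phi> x"
  unfolding vfix_def using Wrc[OF P \<phi> r.rc_some[OF \<phi>]] .

lemma WC:
  assumes P: "P \<in> C" and c: "c \<in> Rep F H TH P"
  shows "vfix P c \<in> carrier (M P)"
  unfolding vfix_def using Mm_C[OF P THC r.Rep_some(2)[OF c] x_C] .

lemma Wnat:
  assumes P: "P \<in> C" and Q: "Q \<in> C" and \<rho>: "\<rho> \<in> F P Q" and c: "c \<in> Rep F H TH Q"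
  shows "vfix P (rep_pre F H TH P \<rho> c) = Mm P Q \<rho> (vfix Q c)"
proof -
  define \<phi> where "\<phi> = (SOME \<phi>. \<phi> \<in> c)"
  have \<phi>F: "\<phi> \<in> F Q TH" and c\<phi>: "c = rep_cls F H TH Q \<phi>" using r.Rep_some[OF c] unfolding \<phi>_def by auto
  have "rep_pre F H TH P \<rho> c = rep_cls F H TH P (comp_on P \<phi> \<rho>)"
    unfolding c\<phi> by (rule r.rep_pre_rc[OF \<phi>F \<rho>])
  then have "vfix P (rep_pre F H TH P \<rho> c) = Mm P TH (comp_on P \<phi> \<rho>) x"
    using Wv[OF P fs_comp[OF Ffs \<rho> \<phi>F]] by simp
  also have "\<dots> = Mm P Q \<rho> (Mm Q TH \<phi> x)" by (rule Mm_comp[OF P Q THC \<rho> \<phi>F x_C])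
  also have "Mm Q TH \<phi> x = vfix Q c" unfolding vfix_def \<phi>_def ..
  finally show ?thesis .
qed

lemma Wid: "vfix TH (rep_cls F H TH TH (idm TH)) = x"
  using Wv[OF THC r.idTH_F] Mm_id[OF THC x_C] by simp

end

end

lemma Inl_Plus[simp]: "Inl a \<in> A <+> B \<longleftrightarrow> a \<in> A" by auto
lemma Inr_Plus[simp]: "Inr b \<in> A <+> B \<longleftrightarrow> b \<in> B" by auto

lemma linear_map_cong_free:
  assumes R: "ring R" and h: "linear_map R (free_mod R B) N h"
    and eq: "\<And>a. a \<in> carrier (free_mod R B) \<Longrightarrow> h a = k a"
  shows "linear_map R (free_mod R B) N k"
  unfolding linear_map_def
proof (intro conjI ballI)
  show "k \<in> carrier (free_mod R B) \<rightarrow> carrier N" using linear_mapD(1)[OF h] eq by auto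
next
  fix x y assume x: "x \<in> carrier (free_mod R B)" and y: "y \<in> carrier (free_mod R B)"
  have "k (x \<oplus>\<^bsub>free_mod R B\<^esub> y) = h (x \<oplus>\<^bsub>free_mod R B\<^esub> y)"
    using eq[OF free_mod_add_closed[OF R x y]] by simp
  then show "k (x \<oplus>\<^bsub>free_mod R B\<^esub> y) = k x \<oplus>\<^bsub>N\<^esub> k y"
    using linear_mapD(2)[OF h x y] eq[OF x] eq[OF y] by simp
next
  fix r x assume r: "r \<in> carrier R" and x: "x \<in> carrier (free_mod R B)"
  have "k (r \<odot>\<^bsub>free_mod R B\<^esub> x) = h (r \<odot>\<^bsub>free_mod R B\<^esub> x)"
    using eq[OF free_mod_smult_closed[OF R r x]] by simp
  then show "k (r \<odot>\<^bsub>free_mod R B\<^esub> x) = r \<odot>\<^bsub>N\<^esub> k x"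
    using linear_mapD(3)[OF h r x] eq[OF x] by simp
qed

lemma linear_map_zero_map:
  assumes "module R N"
  shows "linear_map R A N (\<lambda>a. \<zero>\<^bsub>N\<^esub>)"
proof -
  interpret module R N by fact
  show ?thesis unfolding linear_map_def by simp
qed

context mainctx
begin

section \<open>Natural transformations between free functors and M\<close>

context
  fixes B :: "'a set \<Rightarrow> 'x set" and g :: "'a set \<Rightarrow> 'a set \<Rightarrow> ('a \<Rightarrow> 'a) \<Rightarrow> 'x \<Rightarrow> 'x"
  assumes Bfin0: "\<forall>P\<in>C. finite (B P)"
    and gmap0: "\<forall>P\<in>C. \<forall>Q\<in>C. \<forall>\<rho>\<in>F P Q. g P Q \<rho> \<in> B Q \<rightarrow> B P"
begin

lemma Bfin: "P \<in> C \<Longrightarrow> finite (B P)" using Bfin0 by blast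
lemma gmap: "P \<in> C \<Longrightarrow> Q \<in> C \<Longrightarrow> \<rho> \<in> F P Q \<Longrightarrow> g P Q \<rho> \<in> B Q \<rightarrow> B P" using gmap0 by blast

abbreviation "NT \<equiv> nat_trans G F C R B (\<lambda>P Q \<rho>. free_map R (B Q) (g P Q \<rho>)) M Mmap"

lemma NT_lin: "\<eta> \<in> NT \<Longrightarrow> P \<in> C \<Longrightarrow> linear_map R (free_mod R (B P)) (M P) (\<eta> P)"
  unfolding nat_trans_def by blast

lemma NT_ext: "\<eta> \<in> NT \<Longrightarrow> \<eta> \<in> extensional C" "\<eta> \<in> NT \<Longrightarrow> P \<in> C \<Longrightarrow> \<eta> P \<in> extensional (carrier (free_mod R (B P)))"
  unfolding nat_trans_def by blast+

lemma NT_nat: "\<eta> \<in> NT \<Longrightarrow> P \<in> C \<Longrightarrow> Q \<in> C \<Longrightarrow> \<rho> \<in> F P Q \<Longrightarrow> a \<in> carrier (free_mod R (B Q))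
   \<Longrightarrow> \<eta> P (free_map R (B Q) (g P Q \<rho>) a) = Mm P Q \<rho> (\<eta> Q a)"
  unfolding nat_trans_def by blast

lemma NT_eC: "\<eta> \<in> NT \<Longrightarrow> P \<in> C \<Longrightarrow> c \<in> B P \<Longrightarrow> \<eta> P (basis_vec R c) \<in> carrier (M P)"
  by (rule linear_mapD(1)[OF NT_lin basis_vec_carrier[OF Rring]])

lemma NT_basis:
  assumes "\<eta> \<in> NT" "P \<in> C" "Q \<in> C" "\<rho> \<in> F P Q" "c \<in> B Q"
  shows "\<eta> P (basis_vec R (g P Q \<rho> c)) = Mm P Q \<rho> (\<eta> Q (basis_vec R c))"
proof -
  have e: "free_map R (B Q) (g P Q \<rho>) (basis_vec R c) = basis_vec R (g P Q \<rho> c)"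
    by (rule fm_basis[OF Rring Bfin[OF assms(3)] assms(5)])
  show ?thesis using NT_nat[OF assms(1-4) basis_vec_carrier[OF Rring assms(5)]] unfolding e .
qed

lemma NT_unique:
  assumes \<eta>: "\<eta> \<in> NT" and \<mu>: "\<mu> \<in> NT"
    and eq: "\<And>P c. P \<in> C \<Longrightarrow> c \<in> B P \<Longrightarrow> \<eta> P (basis_vec R c) = \<mu> P (basis_vec R c)"
  shows "\<eta> = \<mu>"
proof (rule ext)
  fix P show "\<eta> P = \<mu> P"
  proof (cases "P \<in> C")
    case True
    show ?thesis
    proof (rule ext)
      fix a show "\<eta> P a = \<mu> P a"
      proof (cases "a \<in> carrier (free_mod R (B P))")
        case True
        show ?thesis by (rule free_uniq[OF R M_mod[OF \<open>P \<in> C\<close>] NT_lin[OF \<eta> \<open>P \<in> C\<close>] NT_lin[OF \<mu> \<open>P \<in> C\<close>]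
              Bfin[OF \<open>P \<in> C\<close>] eq[OF \<open>P \<in> C\<close>] True])
      next
        case False
        have "\<eta> P a = undefined" by (rule extensional_arb[OF NT_ext(2)[OF \<eta> \<open>P \<in> C\<close>] False])
        moreover have "\<mu> P a = undefined" by (rule extensional_arb[OF NT_ext(2)[OF \<mu> \<open>P \<in> C\<close>] False])
        ultimately show ?thesis by simp
      qed
    qed
  next
    case False
    have "\<eta> P = undefined" by (rule extensional_arb[OF NT_ext(1)[OF \<eta>] False])
    moreover have "\<mu> P = undefined" by (rule extensional_arb[OF NT_ext(1)[OF \<mu>] False])
    ultimately show ?thesis by simp
  qed
qed

definition mkNT :: "('a set \<Rightarrow> 'x \<Rightarrow> 'm) \<Rightarrow> 'a set \<Rightarrow> ('x \<Rightarrow> 'r) \<Rightarrow> 'm" where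
  "mkNT v = (\<lambda>P\<in>C. \<lambda>a\<in>carrier (free_mod R (B P)). finsum (M P) (\<lambda>c. a c \<odot>\<^bsub>M P\<^esub> v P c) (B P))"

context
  fixes v :: "'a set \<Rightarrow> 'x \<Rightarrow> 'm"
  assumes vC0: "\<forall>P\<in>C. \<forall>c\<in>B P. v P c \<in> carrier (M P)"
    and vnat0: "\<forall>P\<in>C. \<forall>Q\<in>C. \<forall>\<rho>\<in>F P Q. \<forall>c\<in>B Q. v P (g P Q \<rho> c) = Mm P Q \<rho> (v Q c)"
begin

lemma vC: "P \<in> C \<Longrightarrow> c \<in> B P \<Longrightarrow> v P c \<in> carrier (M P)"
  using vC0 by blast
lemma vnat: "P \<in> C \<Longrightarrow> Q \<in> C \<Longrightarrow> \<rho> \<in> F P Q \<Longrightarrow> c \<in> B Q \<Longrightarrow> v P (g P Q \<rho> c) = Mm P Q \<rho> (v Q c)"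
  using vnat0 by blast

lemma mkNT_lin:
  assumes P: "P \<in> C"
  shows "linear_map R (free_mod R (B P)) (M P) (mkNT v P)"
proof -
  interpret N: module R "M P" by (rule M_mod[OF P])
  have aR: "a c \<in> carrier R" if "a \<in> carrier (free_mod R (B P))" "c \<in> B P" for a c
    using that by (simp add: free_mod_carrier)
  have fC: "(\<lambda>c. a c \<odot>\<^bsub>M P\<^esub> v P c) \<in> B P \<rightarrow> carrier (M P)" if "a \<in> carrier (free_mod R (B P))" for a
    using aR[OF that] vC[OF P] by simp
  show ?thesis unfolding linear_map_def
  proof (intro conjI ballI)
    show "mkNT v P \<in> carrier (free_mod R (B P)) \<rightarrow> carrier (M P)"
      unfolding mkNT_def using P fC N.finsum_closed by simp
  next
    fix a b assume a: "a \<in> carrier (free_mod R (B P))" and b: "b \<in> carrier (free_mod R (B P))"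
    have ab: "a \<oplus>\<^bsub>free_mod R (B P)\<^esub> b \<in> carrier (free_mod R (B P))" by (rule free_mod_add_closed[OF Rring a b])
    have "finsum (M P) (\<lambda>c. (a \<oplus>\<^bsub>free_mod R (B P)\<^esub> b) c \<odot>\<^bsub>M P\<^esub> v P c) (B P)
        = finsum (M P) (\<lambda>c. a c \<odot>\<^bsub>M P\<^esub> v P c \<oplus>\<^bsub>M P\<^esub> b c \<odot>\<^bsub>M P\<^esub> v P c) (B P)"
      by (rule N.finsum_cong') (use aR[OF a] aR[OF b] vC[OF P] in \<open>auto simp: free_mod_add N.smult_l_distr\<close>)
    also have "\<dots> = finsum (M P) (\<lambda>c. a c \<odot>\<^bsub>M P\<^esub> v P c) (B P) \<oplus>\<^bsub>M P\<^esub> finsum (M P) (\<lambda>c. b c \<odot>\<^bsub>M P\<^esub> v P c) (B P)"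
      by (rule N.finsum_addf[OF fC[OF a] fC[OF b]])
    finally show "mkNT v P (a \<oplus>\<^bsub>free_mod R (B P)\<^esub> b) = mkNT v P a \<oplus>\<^bsub>M P\<^esub> mkNT v P b"
      unfolding mkNT_def using P a b ab by simp
  next
    fix r a assume r: "r \<in> carrier R" and a: "a \<in> carrier (free_mod R (B P))"
    have ra: "r \<odot>\<^bsub>free_mod R (B P)\<^esub> a \<in> carrier (free_mod R (B P))" by (rule free_mod_smult_closed[OF Rring r a])
    have "finsum (M P) (\<lambda>c. (r \<odot>\<^bsub>free_mod R (B P)\<^esub> a) c \<odot>\<^bsub>M P\<^esub> v P c) (B P)
        = finsum (M P) (\<lambda>c. r \<odot>\<^bsub>M P\<^esub> (a c \<odot>\<^bsub>M P\<^esub> v P c)) (B P)"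
      by (rule N.finsum_cong') (use aR[OF a] vC[OF P] r in \<open>auto simp: free_mod_smult N.smult_assoc1\<close>)
    also have "\<dots> = r \<odot>\<^bsub>M P\<^esub> finsum (M P) (\<lambda>c. a c \<odot>\<^bsub>M P\<^esub> v P c) (B P)"
      by (rule N.finsum_smult_ldistr[OF Bfin[OF P] r fC[OF a], symmetric])
    finally show "mkNT v P (r \<odot>\<^bsub>free_mod R (B P)\<^esub> a) = r \<odot>\<^bsub>M P\<^esub> mkNT v P a"
      unfolding mkNT_def using P a ra by simp
  qed
qed

lemma mkNT_basis:
  assumes P: "P \<in> C" and c: "c \<in> B P"
  shows "mkNT v P (basis_vec R c) = v P c"
proof -
  interpret N: module R "M P" by (rule M_mod[OF P])
  have e: "basis_vec R c \<in> carrier (free_mod R (B P))" by (rule basis_vec_carrier[OF Rring c])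
  have "finsum (M P) (\<lambda>c'. basis_vec R c c' \<odot>\<^bsub>M P\<^esub> v P c') (B P)
      = finsum (M P) (\<lambda>c'. if c' = c then v P c' else \<zero>\<^bsub>M P\<^esub>) (B P)"
    by (rule N.finsum_cong') (use vC[OF P] in \<open>auto simp: basis_vec_def\<close>)
  also have "\<dots> = v P c"
    by (rule N.add.finprod_singleton_swap[OF c Bfin[OF P]]) (use vC[OF P] in auto)
  finally show ?thesis unfolding mkNT_def using P e by simp
qed

lemma mkNT_NT: "mkNT v \<in> NT"
  unfolding nat_trans_def
proof (intro CollectI conjI ballI)
  show "mkNT v \<in> extensional C" unfolding mkNT_def by simp
next
  fix P assume P: "P \<in> C"
  show "mkNT v P \<in> extensional (carrier (free_mod R (B P)))" unfolding mkNT_def using P by simp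
  show "linear_map R (free_mod R (B P)) (M P) (mkNT v P)" by (rule mkNT_lin[OF P])
next
  fix P Q \<rho> a assume P: "P \<in> C" and Q: "Q \<in> C" and \<rho>: "\<rho> \<in> F P Q" and a: "a \<in> carrier (free_mod R (B Q))"
  have l1: "linear_map R (free_mod R (B Q)) (M P) (\<lambda>a. mkNT v P (free_map R (B Q) (g P Q \<rho>) a))"
    by (rule linear_map_comp[OF fm_linear[OF Rring Bfin[OF Q] gmap[OF P Q \<rho>]] mkNT_lin[OF P]])
  have l2: "linear_map R (free_mod R (B Q)) (M P) (\<lambda>a. Mm P Q \<rho> (mkNT v Q a))"
    by (rule linear_map_comp[OF mkNT_lin[OF Q] Mm_lin[OF P Q \<rho>]])
  show "mkNT v P (free_map R (B Q) (g P Q \<rho>) a) = Mm P Q \<rho> (mkNT v Q a)"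
  proof (rule free_uniq[OF R M_mod[OF P] l1 l2 Bfin[OF Q] _ a])
    fix c assume c: "c \<in> B Q"
    have gc: "g P Q \<rho> c \<in> B P" using gmap[OF P Q \<rho>] c by blast
    show "mkNT v P (free_map R (B Q) (g P Q \<rho>) (basis_vec R c)) = Mm P Q \<rho> (mkNT v Q (basis_vec R c))"
      unfolding fm_basis[OF Rring Bfin[OF Q] c] mkNT_basis[OF P gc] mkNT_basis[OF Q c] vnat[OF P Q \<rho> c] ..
  qed
qed

end

lemma NT_add:
  assumes \<eta>: "\<eta> \<in> NT" and \<mu>: "\<mu> \<in> NT"
  shows "(\<lambda>P\<in>C. \<lambda>a\<in>carrier (free_mod R (B P)). \<eta> P a \<oplus>\<^bsub>M P\<^esub> \<mu> P a) \<in> NT"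
  unfolding nat_trans_def
proof (intro CollectI conjI ballI)
  show "(\<lambda>P\<in>C. \<lambda>a\<in>carrier (free_mod R (B P)). \<eta> P a \<oplus>\<^bsub>M P\<^esub> \<mu> P a) \<in> extensional C" by simp
next
  fix P assume P: "P \<in> C"
  interpret N: module R "M P" by (rule M_mod[OF P])
  show "(\<lambda>P\<in>C. \<lambda>a\<in>carrier (free_mod R (B P)). \<eta> P a \<oplus>\<^bsub>M P\<^esub> \<mu> P a) P \<in> extensional (carrier (free_mod R (B P)))"
    using P by simp
  note l\<eta> = linear_mapD[OF NT_lin[OF \<eta> P]] and l\<mu> = linear_mapD[OF NT_lin[OF \<mu> P]]
  show "linear_map R (free_mod R (B P)) (M P) ((\<lambda>P\<in>C. \<lambda>a\<in>carrier (free_mod R (B P)). \<eta> P a \<oplus>\<^bsub>M P\<^esub> \<mu> P a) P)"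
    unfolding linear_map_def
  proof (intro conjI ballI)
    show "(\<lambda>P\<in>C. \<lambda>a\<in>carrier (free_mod R (B P)). \<eta> P a \<oplus>\<^bsub>M P\<^esub> \<mu> P a) P \<in> carrier (free_mod R (B P)) \<rightarrow> carrier (M P)"
      using P l\<eta>(1) l\<mu>(1) by simp
  next
    fix a b assume a: "a \<in> carrier (free_mod R (B P))" and b: "b \<in> carrier (free_mod R (B P))"
    have ab: "a \<oplus>\<^bsub>free_mod R (B P)\<^esub> b \<in> carrier (free_mod R (B P))" by (rule free_mod_add_closed[OF Rring a b])
    show "(\<lambda>P\<in>C. \<lambda>a\<in>carrier (free_mod R (B P)). \<eta> P a \<oplus>\<^bsub>M P\<^esub> \<mu> P a) P (a \<oplus>\<^bsub>free_mod R (B P)\<^esub> b) =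
          (\<lambda>P\<in>C. \<lambda>a\<in>carrier (free_mod R (B P)). \<eta> P a \<oplus>\<^bsub>M P\<^esub> \<mu> P a) P a \<oplus>\<^bsub>M P\<^esub>
          (\<lambda>P\<in>C. \<lambda>a\<in>carrier (free_mod R (B P)). \<eta> P a \<oplus>\<^bsub>M P\<^esub> \<mu> P a) P b"
      using P a b ab l\<eta>(1,2) l\<mu>(1,2) by (simp add: N.a_ac)
  next
    fix r a assume r: "r \<in> carrier R" and a: "a \<in> carrier (free_mod R (B P))"
    have ra: "r \<odot>\<^bsub>free_mod R (B P)\<^esub> a \<in> carrier (free_mod R (B P))" by (rule free_mod_smult_closed[OF Rring r a])
    show "(\<lambda>P\<in>C. \<lambda>a\<in>carrier (free_mod R (B P)). \<eta> P a \<oplus>\<^bsub>M P\<^esub> \<mu> P a) P (r \<odot>\<^bsub>free_mod R (B P)\<^esub> a) =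
          r \<odot>\<^bsub>M P\<^esub> (\<lambda>P\<in>C. \<lambda>a\<in>carrier (free_mod R (B P)). \<eta> P a \<oplus>\<^bsub>M P\<^esub> \<mu> P a) P a"
      using P a r ra l\<eta>(1,3) l\<mu>(1,3) by (simp add: N.smult_r_distr)
  qed
next
  fix P Q \<rho> a assume P: "P \<in> C" and Q: "Q \<in> C" and \<rho>: "\<rho> \<in> F P Q" and a: "a \<in> carrier (free_mod R (B Q))"
  have fa: "free_map R (B Q) (g P Q \<rho>) a \<in> carrier (free_mod R (B P))"
    by (rule fm_carrier[OF Rring Bfin[OF Q] gmap[OF P Q \<rho>] a])
  have "Mm P Q \<rho> (\<eta> Q a \<oplus>\<^bsub>M Q\<^esub> \<mu> Q a) = Mm P Q \<rho> (\<eta> Q a) \<oplus>\<^bsub>M P\<^esub> Mm P Q \<rho> (\<mu> Q a)"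
    by (rule linear_mapD(2)[OF Mm_lin[OF P Q \<rho>] linear_mapD(1)[OF NT_lin[OF \<eta> Q] a] linear_mapD(1)[OF NT_lin[OF \<mu> Q] a]])
  then show "(\<lambda>P\<in>C. \<lambda>a\<in>carrier (free_mod R (B P)). \<eta> P a \<oplus>\<^bsub>M P\<^esub> \<mu> P a) P (free_map R (B Q) (g P Q \<rho>) a) =
         Mm P Q \<rho> ((\<lambda>P\<in>C. \<lambda>a\<in>carrier (free_mod R (B P)). \<eta> P a \<oplus>\<^bsub>M P\<^esub> \<mu> P a) Q a)"
    using P Q a fa NT_nat[OF \<eta> P Q \<rho> a] NT_nat[OF \<mu> P Q \<rho> a] by simp
qed

end

end

sublocale mainctx \<subseteq> r1: repctx G F F1 "carrier G" by (rule rc1)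
sublocale mainctx \<subseteq> r2: repctx G F F2 S' by (rule rc2)
sublocale mainctx \<subseteq> re: repctx G F Fe S' by (rule rce)

context mainctx
begin

abbreviation "B0 \<equiv> CX0_basis F F1 F2 S S'"
abbreviation "g0 P Q \<rho> \<equiv> map_sum (rep_pre F F1 S P \<rho>) (rep_pre F F2 S' P \<rho>)"
abbreviation "B1 \<equiv> CX1_basis F Fe S'"
abbreviation "g1 P Q \<rho> \<equiv> rep_pre F Fe S' P \<rho>"
abbreviation "N0 \<equiv> nat_trans G F C R B0 (CX0_map R F F1 F2 S S') M Mmap"
abbreviation "N1 \<equiv> nat_trans G F C R B1 (CX1_map R F Fe S') M Mmap"
abbreviation "e \<equiv> basis_vec R"

lemma CX0_eq: "CX0_map R F F1 F2 S S' = (\<lambda>P Q \<rho>. free_map R (B0 Q) (g0 P Q \<rho>))"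
  by (intro ext) (simp add: CX0_map_def)
lemma CX1_eq: "CX1_map R F Fe S' = (\<lambda>P Q \<rho>. free_map R (B1 Q) (g1 P Q \<rho>))"
  by (intro ext) (simp add: CX1_map_def)

lemma B0_fin: "\<forall>P\<in>C. finite (B0 P)"
  unfolding CX0_basis_def using r1.Rep_finite[OF fin] r2.Rep_finite[OF fin] by simp
lemma B1_fin: "\<forall>P\<in>C. finite (B1 P)"
  unfolding CX1_basis_def using re.Rep_finite[OF fin] by simp

lemma g0_map: "\<forall>P\<in>C. \<forall>Q\<in>C. \<forall>\<rho>\<in>F P Q. g0 P Q \<rho> \<in> B0 Q \<rightarrow> B0 P"
  unfolding CX0_basis_def using r1.rep_pre_maps r2.rep_pre_maps by (auto simp: Pi_def)
lemma g1_map: "\<forall>P\<in>C. \<forall>Q\<in>C. \<forall>\<rho>\<in>F P Q. g1 P Q \<rho> \<in> B1 Q \<rightarrow> B1 P"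
  unfolding CX1_basis_def using re.rep_pre_maps by blast

lemma B0_fin': "P \<in> C \<Longrightarrow> finite (B0 P)" using B0_fin by blast
lemma B1_fin': "P \<in> C \<Longrightarrow> finite (B1 P)" using B1_fin by blast

lemmas N0_lin = NT_lin[where B=B0 and g="\<lambda>P Q \<rho>. g0 P Q \<rho>", OF B0_fin g0_map, folded CX0_eq]
lemmas N0_eC = NT_eC[where B=B0 and g="\<lambda>P Q \<rho>. g0 P Q \<rho>", OF B0_fin g0_map, folded CX0_eq]
lemmas N0_basis = NT_basis[where B=B0 and g="\<lambda>P Q \<rho>. g0 P Q \<rho>", OF B0_fin g0_map, folded CX0_eq]
lemmas N0_unique = NT_unique[where B=B0 and g="\<lambda>P Q \<rho>. g0 P Q \<rho>", OF B0_fin g0_map, folded CX0_eq]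
lemmas N0_ext = NT_ext[where B=B0 and g="\<lambda>P Q \<rho>. g0 P Q \<rho>", OF B0_fin g0_map, folded CX0_eq]
lemmas N0_nat = NT_nat[where B=B0 and g="\<lambda>P Q \<rho>. g0 P Q \<rho>", OF B0_fin g0_map, folded CX0_eq]
lemmas N1_lin = NT_lin[where B=B1 and g="\<lambda>P Q \<rho>. g1 P Q \<rho>", OF B1_fin g1_map, folded CX1_eq]
lemmas N1_eC = NT_eC[where B=B1 and g="\<lambda>P Q \<rho>. g1 P Q \<rho>", OF B1_fin g1_map, folded CX1_eq]
lemmas N1_basis = NT_basis[where B=B1 and g="\<lambda>P Q \<rho>. g1 P Q \<rho>", OF B1_fin g1_map, folded CX1_eq]
lemmas N1_unique = NT_unique[where B=B1 and g="\<lambda>P Q \<rho>. g1 P Q \<rho>", OF B1_fin g1_map, folded CX1_eq]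
lemmas N1_ext = NT_ext[where B=B1 and g="\<lambda>P Q \<rho>. g1 P Q \<rho>", OF B1_fin g1_map, folded CX1_eq]
lemmas N1_nat = NT_nat[where B=B1 and g="\<lambda>P Q \<rho>. g1 P Q \<rho>", OF B1_fin g1_map, folded CX1_eq]
lemmas N1_add = NT_add[where B=B1 and g="\<lambda>P Q \<rho>. g1 P Q \<rho>", OF B1_fin g1_map, folded CX1_eq]

lemma FS'S: "\<phi> \<in> F P S' \<Longrightarrow> \<phi> \<in> F P S"
  using fs_enlarge[OF grp Ffs _ subgroup.subset[OF S'sub] S_subgrps] by blast

definition k1 :: "'a set \<Rightarrow> ('a \<Rightarrow> 'a) set \<Rightarrow> ('a \<Rightarrow> 'a) set" where
  "k1 P d = rep_cls F F1 S P (SOME \<phi>. \<phi> \<in> d)"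
definition k2 :: "'a set \<Rightarrow> ('a \<Rightarrow> 'a) set \<Rightarrow> ('a \<Rightarrow> 'a) set" where
  "k2 P d = rep_cls F F2 S' P (SOME \<phi>. \<phi> \<in> d)"

lemma k1_rc:
  assumes \<phi>: "\<phi> \<in> F P S'"
  shows "k1 P (rep_cls F Fe S' P \<phi>) = rep_cls F F1 S P \<phi>"
proof -
  let ?\<psi> = "SOME \<psi>. \<psi> \<in> rep_cls F Fe S' P \<phi>"
  have "?\<psi> \<in> rep_cls F Fe S' P \<phi>" by (rule re.rc_some[OF \<phi>])
  moreover have sub: "F P S' \<subseteq> F P S" using FS'S by blast
  ultimately show ?thesis
    using rep_cls_mono[where F=F and P=P and TH=S' and TH'=S, OF Fe1 sub] r1.rc_eq[OF FS'S[OF \<phi>]]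
    unfolding k1_def by metis
qed
lemma k2_rc:
  assumes \<phi>: "\<phi> \<in> F P S'"
  shows "k2 P (rep_cls F Fe S' P \<phi>) = rep_cls F F2 S' P \<phi>"
proof -
  let ?\<psi> = "SOME \<psi>. \<psi> \<in> rep_cls F Fe S' P \<phi>"
  have "?\<psi> \<in> rep_cls F Fe S' P \<phi>" by (rule re.rc_some[OF \<phi>])
  then have "?\<psi> \<in> rep_cls F F2 S' P \<phi>"
    using rep_cls_mono[where F=F and P=P and TH=S' and TH'=S', OF Fe2 subset_refl] by blast
  then show ?thesis unfolding k2_def by (rule r2.rc_eq[OF \<phi>])
qed

lemma B1_cases:
  assumes "d \<in> B1 P"
  obtains \<phi> where "\<phi> \<in> F P S'" "d = rep_cls F Fe S' P \<phi>" "\<phi> = (SOME \<phi>. \<phi> \<in> d)"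
  using re.Rep_some[of d P] assms unfolding CX1_basis_def by blast

lemma k1_map: "d \<in> B1 P \<Longrightarrow> k1 P d \<in> Rep F F1 S P"
  by (metis B1_cases k1_rc FS'S r1.rc_in_Rep)
lemma k2_map: "d \<in> B1 P \<Longrightarrow> k2 P d \<in> Rep F F2 S' P"
  by (metis B1_cases k2_rc r2.rc_in_Rep)

lemma fmap_eq:
  "f_map R F F1 F2 Fe S S' P a = (\<lambda>z. case z of Inl c \<Rightarrow> \<ominus>\<^bsub>R\<^esub> free_map R (B1 P) (k1 P) a c
                                           | Inr c \<Rightarrow> free_map R (B1 P) (k2 P) a c)"
  unfolding f_map_def free_map_def k1_def k2_def by simp

lemma fmap_lin:
  assumes P: "P \<in> C"
  shows "linear_map R (free_mod R (B1 P)) (free_mod R (B0 P)) (f_map R F F1 F2 Fe S S' P)"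
proof -
  interpret R: cring R by (rule R)
  have m1: "k1 P \<in> B1 P \<rightarrow> Rep F F1 S P" using k1_map by blast
  have m2: "k2 P \<in> B1 P \<rightarrow> Rep F F2 S' P" using k2_map by blast
  note c1 = fm_carrier[OF Rring B1_fin'[OF P] m1] and c2 = fm_carrier[OF Rring B1_fin'[OF P] m2]
  have A1R: "free_map R (B1 P) (k1 P) a c \<in> carrier R" if a: "a \<in> carrier (free_mod R (B1 P))" for a c
    using c1[OF a] by (cases "c \<in> Rep F F1 S P") (auto simp: free_mod_carrier)
  have A2R: "free_map R (B1 P) (k2 P) a c \<in> carrier R" if a: "a \<in> carrier (free_mod R (B1 P))" for a c
    using c2[OF a] by (cases "c \<in> Rep F F2 S' P") (auto simp: free_mod_carrier)
  show ?thesis unfolding linear_map_def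
  proof (intro conjI ballI)
    show "f_map R F F1 F2 Fe S S' P \<in> carrier (free_mod R (B1 P)) \<rightarrow> carrier (free_mod R (B0 P))"
    proof
      fix a assume a: "a \<in> carrier (free_mod R (B1 P))"
      have s1: "finite {c. free_map R (B1 P) (k1 P) a c \<noteq> \<zero>\<^bsub>R\<^esub>}" using c1[OF a] by (simp add: free_mod_carrier)
      have s2: "finite {c. free_map R (B1 P) (k2 P) a c \<noteq> \<zero>\<^bsub>R\<^esub>}" using c2[OF a] by (simp add: free_mod_carrier)
      have sub: "{z. f_map R F F1 F2 Fe S S' P a z \<noteq> \<zero>\<^bsub>R\<^esub>}
          \<subseteq> Inl ` {c. free_map R (B1 P) (k1 P) a c \<noteq> \<zero>\<^bsub>R\<^esub>} \<union> Inr ` {c. free_map R (B1 P) (k2 P) a c \<noteq> \<zero>\<^bsub>R\<^esub>}"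
      proof
        fix z assume "z \<in> {z. f_map R F F1 F2 Fe S S' P a z \<noteq> \<zero>\<^bsub>R\<^esub>}"
        then show "z \<in> Inl ` {c. free_map R (B1 P) (k1 P) a c \<noteq> \<zero>\<^bsub>R\<^esub>} \<union> Inr ` {c. free_map R (B1 P) (k2 P) a c \<noteq> \<zero>\<^bsub>R\<^esub>}"
          unfolding fmap_eq by (cases z) auto
      qed
      have fin: "finite {z. f_map R F F1 F2 Fe S S' P a z \<noteq> \<zero>\<^bsub>R\<^esub>}"
        by (rule finite_subset[OF sub]) (use s1 s2 in simp)
      have inR: "\<forall>z\<in>B0 P. f_map R F F1 F2 Fe S S' P a z \<in> carrier R"
      proof
        fix z show "f_map R F F1 F2 Fe S S' P a z \<in> carrier R"
          unfolding fmap_eq using A1R[OF a] A2R[OF a] by (cases z) auto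
      qed
      have out: "\<forall>z. z \<notin> B0 P \<longrightarrow> f_map R F F1 F2 Fe S S' P a z = \<zero>\<^bsub>R\<^esub>"
      proof (intro allI impI)
        fix z assume z: "z \<notin> B0 P"
        show "f_map R F F1 F2 Fe S S' P a z = \<zero>\<^bsub>R\<^esub>"
        proof (cases z)
          case (Inl c)
          then have "c \<notin> Rep F F1 S P" using z unfolding CX0_basis_def by simp
          then have "free_map R (B1 P) (k1 P) a c = \<zero>\<^bsub>R\<^esub>" using c1[OF a] by (simp add: free_mod_carrier)
          then show ?thesis unfolding fmap_eq using Inl by simp
        next
          case (Inr c)
          then have "c \<notin> Rep F F2 S' P" using z unfolding CX0_basis_def by simp
          then have "free_map R (B1 P) (k2 P) a c = \<zero>\<^bsub>R\<^esub>" using c2[OF a] by (simp add: free_mod_carrier)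
          then show ?thesis unfolding fmap_eq using Inr by simp
        qed
      qed
      show "f_map R F F1 F2 Fe S S' P a \<in> carrier (free_mod R (B0 P))"
        unfolding free_mod_carrier using inR out fin by blast
    qed
  next
    fix a b assume a: "a \<in> carrier (free_mod R (B1 P))" and b: "b \<in> carrier (free_mod R (B1 P))"
    show "f_map R F F1 F2 Fe S S' P (a \<oplus>\<^bsub>free_mod R (B1 P)\<^esub> b)
        = f_map R F F1 F2 Fe S S' P a \<oplus>\<^bsub>free_mod R (B0 P)\<^esub> f_map R F F1 F2 Fe S S' P b"
    proof (rule ext)
      fix z show "f_map R F F1 F2 Fe S S' P (a \<oplus>\<^bsub>free_mod R (B1 P)\<^esub> b) z
        = (f_map R F F1 F2 Fe S S' P a \<oplus>\<^bsub>free_mod R (B0 P)\<^esub> f_map R F F1 F2 Fe S S' P b) z"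
        unfolding fmap_eq fm_add[OF Rring B1_fin'[OF P] a b, of "k1 P" "Rep F F1 S P"]
          fm_add[OF Rring B1_fin'[OF P] a b, of "k2 P" "Rep F F2 S' P"]
        using A1R[OF a] A1R[OF b] by (cases z) (auto simp: R.minus_add free_mod_add)
    qed
  next
    fix r a assume r: "r \<in> carrier R" and a: "a \<in> carrier (free_mod R (B1 P))"
    show "f_map R F F1 F2 Fe S S' P (r \<odot>\<^bsub>free_mod R (B1 P)\<^esub> a) = r \<odot>\<^bsub>free_mod R (B0 P)\<^esub> f_map R F F1 F2 Fe S S' P a"
    proof (rule ext)
      fix z show "f_map R F F1 F2 Fe S S' P (r \<odot>\<^bsub>free_mod R (B1 P)\<^esub> a) z = (r \<odot>\<^bsub>free_mod R (B0 P)\<^esub> f_map R F F1 F2 Fe S S' P a) z"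
        unfolding fmap_eq fm_smult[OF Rring B1_fin'[OF P] m1 r a] fm_smult[OF Rring B1_fin'[OF P] m2 r a]
        using A1R[OF a] r by (cases z) (auto simp: free_mod_smult CX0_basis_def R.r_minus)
    qed
  qed
qed

lemma fmap_basis:
  assumes P: "P \<in> C" and d: "d \<in> B1 P"
  shows "f_map R F F1 F2 Fe S S' P (e d)
     = ((\<ominus>\<^bsub>R\<^esub> \<one>\<^bsub>R\<^esub>) \<odot>\<^bsub>free_mod R (B0 P)\<^esub> e (Inl (k1 P d))) \<oplus>\<^bsub>free_mod R (B0 P)\<^esub> e (Inr (k2 P d))"
proof (rule ext)
  interpret R: cring R by (rule R)
  fix z
  show "f_map R F F1 F2 Fe S S' P (e d) z
     = (((\<ominus>\<^bsub>R\<^esub> \<one>\<^bsub>R\<^esub>) \<odot>\<^bsub>free_mod R (B0 P)\<^esub> e (Inl (k1 P d))) \<oplus>\<^bsub>free_mod R (B0 P)\<^esub> e (Inr (k2 P d))) z"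
    unfolding fmap_eq fm_basis[OF Rring B1_fin'[OF P] d]
    using k1_map[OF d] by (cases z) (auto simp: free_mod_smult free_mod_add basis_vec_def CX0_basis_def)
qed

lemma eta_fmap:
  assumes \<eta>: "\<eta> \<in> N0" and P: "P \<in> C" and d: "d \<in> B1 P"
  shows "\<eta> P (f_map R F F1 F2 Fe S S' P (e d)) = \<ominus>\<^bsub>M P\<^esub> \<eta> P (e (Inl (k1 P d))) \<oplus>\<^bsub>M P\<^esub> \<eta> P (e (Inr (k2 P d)))"
proof -
  interpret R: cring R by (rule R)
  interpret N: module R "M P" by (rule M_mod[OF P])
  have i1: "Inl (k1 P d) \<in> B0 P" using k1_map[OF d] unfolding CX0_basis_def by simp
  have i2: "Inr (k2 P d) \<in> B0 P" using k2_map[OF d] unfolding CX0_basis_def by simp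
  have e1: "e (Inl (k1 P d)) \<in> carrier (free_mod R (B0 P))" by (rule basis_vec_carrier[OF Rring i1])
  have e2: "e (Inr (k2 P d)) \<in> carrier (free_mod R (B0 P))" by (rule basis_vec_carrier[OF Rring i2])
  have m1: "\<ominus>\<^bsub>R\<^esub> \<one>\<^bsub>R\<^esub> \<in> carrier R" by simp
  have s1: "(\<ominus>\<^bsub>R\<^esub> \<one>\<^bsub>R\<^esub>) \<odot>\<^bsub>free_mod R (B0 P)\<^esub> e (Inl (k1 P d)) \<in> carrier (free_mod R (B0 P))"
    by (rule free_mod_smult_closed[OF Rring m1 e1])
  note l = linear_mapD[OF N0_lin[OF \<eta> P]]
  have "\<eta> P (f_map R F F1 F2 Fe S S' P (e d))
      = \<eta> P ((\<ominus>\<^bsub>R\<^esub> \<one>\<^bsub>R\<^esub>) \<odot>\<^bsub>free_mod R (B0 P)\<^esub> e (Inl (k1 P d))) \<oplus>\<^bsub>M P\<^esub> \<eta> P (e (Inr (k2 P d)))"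
    unfolding fmap_basis[OF P d] by (rule l(2)[OF s1 e2])
  also have "\<eta> P ((\<ominus>\<^bsub>R\<^esub> \<one>\<^bsub>R\<^esub>) \<odot>\<^bsub>free_mod R (B0 P)\<^esub> e (Inl (k1 P d))) = (\<ominus>\<^bsub>R\<^esub> \<one>\<^bsub>R\<^esub>) \<odot>\<^bsub>M P\<^esub> \<eta> P (e (Inl (k1 P d)))"
    by (rule l(3)[OF m1 e1])
  also have "\<dots> = \<ominus>\<^bsub>M P\<^esub> \<eta> P (e (Inl (k1 P d)))"
    using N.smult_l_minus[OF R.one_closed l(1)[OF e1]] l(1)[OF e1] by simp
  finally show ?thesis .
qed

lemma u1C:
  assumes \<eta>: "\<eta> \<in> N0"
  shows "\<forall>P\<in>C. \<forall>c\<in>Rep F F1 S P. \<eta> P (e (Inl c)) \<in> carrier (M P)"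
  using N0_eC[OF \<eta>] unfolding CX0_basis_def by simp

lemma u1N:
  assumes \<eta>: "\<eta> \<in> N0"
  shows "\<forall>P\<in>C. \<forall>Q\<in>C. \<forall>\<rho>\<in>F P Q. \<forall>c\<in>Rep F F1 S Q.
       \<eta> P (e (Inl (rep_pre F F1 S P \<rho> c))) = Mm P Q \<rho> (\<eta> Q (e (Inl c)))"
proof (intro ballI)
  fix P Q \<rho> c assume "P \<in> C" "Q \<in> C" "\<rho> \<in> F P Q" "c \<in> Rep F F1 S Q"
  with N0_basis[OF \<eta>, of P Q \<rho> "Inl c"] show "\<eta> P (e (Inl (rep_pre F F1 S P \<rho> c))) = Mm P Q \<rho> (\<eta> Q (e (Inl c)))"
    unfolding CX0_basis_def by simp
qed

lemma u2C:
  assumes \<eta>: "\<eta> \<in> N0"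
  shows "\<forall>P\<in>C. \<forall>c\<in>Rep F F2 S' P. \<eta> P (e (Inr c)) \<in> carrier (M P)"
  using N0_eC[OF \<eta>] unfolding CX0_basis_def by simp

lemma u2N:
  assumes \<eta>: "\<eta> \<in> N0"
  shows "\<forall>P\<in>C. \<forall>Q\<in>C. \<forall>\<rho>\<in>F P Q. \<forall>c\<in>Rep F F2 S' Q.
       \<eta> P (e (Inr (rep_pre F F2 S' P \<rho> c))) = Mm P Q \<rho> (\<eta> Q (e (Inr c)))"
proof (intro ballI)
  fix P Q \<rho> c assume "P \<in> C" "Q \<in> C" "\<rho> \<in> F P Q" "c \<in> Rep F F2 S' Q"
  with N0_basis[OF \<eta>, of P Q \<rho> "Inr c"] show "\<eta> P (e (Inr (rep_pre F F2 S' P \<rho> c))) = Mm P Q \<rho> (\<eta> Q (e (Inr c)))"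
    unfolding CX0_basis_def by simp
qed

lemma ueC:
  assumes \<eta>: "\<eta> \<in> N1"
  shows "\<forall>P\<in>C. \<forall>c\<in>Rep F Fe S' P. \<eta> P (e c) \<in> carrier (M P)"
  using N1_eC[OF \<eta>] unfolding CX1_basis_def by simp

lemma ueN:
  assumes \<eta>: "\<eta> \<in> N1"
  shows "\<forall>P\<in>C. \<forall>Q\<in>C. \<forall>\<rho>\<in>F P Q. \<forall>c\<in>Rep F Fe S' Q.
       \<eta> P (e (rep_pre F Fe S' P \<rho> c)) = Mm P Q \<rho> (\<eta> Q (e c))"
  using N1_basis[OF \<eta>] unfolding CX1_basis_def by simp

lemma GC1:
  assumes \<eta>: "\<eta> \<in> N0"
  shows "\<And>P \<phi>. P \<in> C \<Longrightarrow> \<phi> \<in> F P S \<Longrightarrow> \<eta> P (e (Inl (rep_cls F F1 S P \<phi>))) = Mm P S \<phi> (\<eta> S (e (Inl (rep_cls F F1 S S (idm S)))))"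
    and "\<And>P Q \<phi>. P \<in> C \<Longrightarrow> Q \<in> C \<Longrightarrow> \<phi> \<in> F1 P Q \<Longrightarrow> Mm P Q \<phi> (\<eta> Q (e (Inl (rep_cls F F1 S Q (idm Q))))) = \<eta> P (e (Inl (rep_cls F F1 S P (idm P))))"
    and "\<eta> S (e (Inl (rep_cls F F1 S S (idm S)))) \<in> fixed_pts G C M Mmap F1 S"
  using GCa[OF rc1 SC u1C[OF \<eta>] u1N[OF \<eta>]] GCb[OF rc1 SC u1C[OF \<eta>] u1N[OF \<eta>]]
    GCc[OF rc1 SC u1C[OF \<eta>] u1N[OF \<eta>]] by auto

lemma GC2:
  assumes \<eta>: "\<eta> \<in> N0"
  shows "\<And>P \<phi>. P \<in> C \<Longrightarrow> \<phi> \<in> F P S' \<Longrightarrow> \<eta> P (e (Inr (rep_cls F F2 S' P \<phi>))) = Mm P S' \<phi> (\<eta> S' (e (Inr (rep_cls F F2 S' S' (idm S')))))"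
    and "\<And>P Q \<phi>. P \<in> C \<Longrightarrow> Q \<in> C \<Longrightarrow> \<phi> \<in> F2 P Q \<Longrightarrow> Mm P Q \<phi> (\<eta> Q (e (Inr (rep_cls F F2 S' Q (idm Q))))) = \<eta> P (e (Inr (rep_cls F F2 S' P (idm P))))"
    and "\<eta> S' (e (Inr (rep_cls F F2 S' S' (idm S')))) \<in> fixed_pts G C M Mmap F2 S'"
  using GCa[OF rc2 S'C u2C[OF \<eta>] u2N[OF \<eta>]] GCb[OF rc2 S'C u2C[OF \<eta>] u2N[OF \<eta>]]
    GCc[OF rc2 S'C u2C[OF \<eta>] u2N[OF \<eta>]] by auto

lemma GCe:
  assumes \<eta>: "\<eta> \<in> N1"
  shows "\<And>P \<phi>. P \<in> C \<Longrightarrow> \<phi> \<in> F P S' \<Longrightarrow> \<eta> P (e (rep_cls F Fe S' P \<phi>)) = Mm P S' \<phi> (\<eta> S' (e (rep_cls F Fe S' S' (idm S'))))"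
    and "\<eta> S' (e (rep_cls F Fe S' S' (idm S'))) \<in> fixed_pts G C M Mmap Fe S'"
  using GCa[OF rce S'C ueC[OF \<eta>] ueN[OF \<eta>]] GCc[OF rce S'C ueC[OF \<eta>] ueN[OF \<eta>]] by auto

end

context mainctx
begin

abbreviation "nm0 \<equiv> nat_mod G F C R B0 (CX0_map R F F1 F2 S S') M Mmap"
abbreviation "nm1 \<equiv> nat_mod G F C R B1 (CX1_map R F Fe S') M Mmap"
abbreviation "Fm \<equiv> f_map R F F1 F2 Fe S S'"
abbreviation "fst0 \<equiv> fstar R F F1 F2 Fe S S' C"

lemma nm_carrier: "carrier (nat_mod G F C R B Bm M Mmap) = nat_trans G F C R B Bm M Mmap"
  by (simp add: nat_mod_def)
lemma nm_add: "x \<oplus>\<^bsub>nat_mod G F C R B Bm M Mmap\<^esub> y = (\<lambda>P\<in>C. \<lambda>a\<in>carrier (free_mod R (B P)). x P a \<oplus>\<^bsub>M P\<^esub> y P a)"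
  by (simp add: nat_mod_def)
lemma nm_smult: "r \<odot>\<^bsub>nat_mod G F C R B Bm M Mmap\<^esub> x = (\<lambda>P\<in>C. \<lambda>a\<in>carrier (free_mod R (B P)). r \<odot>\<^bsub>M P\<^esub> x P a)"
  by (simp add: nat_mod_def)
lemma nm_zero: "\<zero>\<^bsub>nat_mod G F C R B Bm M Mmap\<^esub> = (\<lambda>P\<in>C. \<lambda>a\<in>carrier (free_mod R (B P)). \<zero>\<^bsub>M P\<^esub>)"
  by (simp add: nat_mod_def)

lemma kernel_iff:
  "fst0 \<eta> = \<zero>\<^bsub>nm1\<^esub> \<longleftrightarrow> (\<forall>P\<in>C. \<forall>a\<in>carrier (free_mod R (B1 P)). \<eta> P (Fm P a) = \<zero>\<^bsub>M P\<^esub>)"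
proof
  assume h: "fst0 \<eta> = \<zero>\<^bsub>nm1\<^esub>"
  show "\<forall>P\<in>C. \<forall>a\<in>carrier (free_mod R (B1 P)). \<eta> P (Fm P a) = \<zero>\<^bsub>M P\<^esub>"
  proof (intro ballI)
    fix P a assume P: "P \<in> C" and a: "a \<in> carrier (free_mod R (B1 P))"
    have "fst0 \<eta> P a = \<zero>\<^bsub>nm1\<^esub> P a" using h by simp
    then show "\<eta> P (Fm P a) = \<zero>\<^bsub>M P\<^esub>" unfolding fstar_def nm_zero using P a by simp
  qed
next
  assume h: "\<forall>P\<in>C. \<forall>a\<in>carrier (free_mod R (B1 P)). \<eta> P (Fm P a) = \<zero>\<^bsub>M P\<^esub>"
  show "fst0 \<eta> = \<zero>\<^bsub>nm1\<^esub>" unfolding fstar_def nm_zero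
    by (intro restrict_ext) (use h in simp)
qed

lemma idF: "P \<in> C \<Longrightarrow> idm P \<in> F P S"
  using fs_incl[OF grp Ffs subgrps_sub(1)[OF C_sub] C_sub S_subgrps] by blast

lemma idF2: "P \<in> subgrps G S' \<Longrightarrow> idm P \<in> F P S'"
  using r2.HF'[OF r2.idP_H] by blast

definition yk :: "('a set \<Rightarrow> (('a \<Rightarrow> 'a) set + ('a \<Rightarrow> 'a) set \<Rightarrow> 'r) \<Rightarrow> 'm) \<Rightarrow> 'a set \<Rightarrow> 'm" where
  "yk \<eta> P = \<eta> P (e (Inl (rep_cls F F1 S P (idm P))))"

lemma Inl_B0: "c \<in> Rep F F1 S P \<Longrightarrow> Inl c \<in> B0 P" unfolding CX0_basis_def by simp
lemma Inr_B0: "c \<in> Rep F F2 S' P \<Longrightarrow> Inr c \<in> B0 P" unfolding CX0_basis_def by simp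
lemma rce_B1: "\<phi> \<in> F P S' \<Longrightarrow> rep_cls F Fe S' P \<phi> \<in> B1 P"
  unfolding CX1_basis_def by (rule re.rc_in_Rep)

lemma fmap_eta_val:
  assumes \<eta>: "\<eta> \<in> N0" and P: "P \<in> C" and \<phi>: "\<phi> \<in> F P S'"
  shows "\<eta> P (Fm P (e (rep_cls F Fe S' P \<phi>)))
     = \<ominus>\<^bsub>M P\<^esub> \<eta> P (e (Inl (rep_cls F F1 S P \<phi>))) \<oplus>\<^bsub>M P\<^esub> \<eta> P (e (Inr (rep_cls F F2 S' P \<phi>)))"
  using eta_fmap[OF \<eta> P rce_B1[OF \<phi>]] k1_rc[OF \<phi>] k2_rc[OF \<phi>] by simp

context
  fixes \<eta>
  assumes \<eta>: "\<eta> \<in> N0"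
    and z: "\<forall>P\<in>C. \<forall>a\<in>carrier (free_mod R (B1 P)). \<eta> P (Fm P a) = \<zero>\<^bsub>M P\<^esub>"
begin

lemma k_eq:
  assumes P: "P \<in> C" and \<phi>: "\<phi> \<in> F P S'"
  shows "\<eta> P (e (Inl (rep_cls F F1 S P \<phi>))) = \<eta> P (e (Inr (rep_cls F F2 S' P \<phi>)))"
proof -
  have "\<eta> P (Fm P (e (rep_cls F Fe S' P \<phi>))) = \<zero>\<^bsub>M P\<^esub>"
    using z P basis_vec_carrier[OF Rring rce_B1[OF \<phi>]] by blast
  then have "\<ominus>\<^bsub>M P\<^esub> \<eta> P (e (Inl (rep_cls F F1 S P \<phi>))) \<oplus>\<^bsub>M P\<^esub> \<eta> P (e (Inr (rep_cls F F2 S' P \<phi>))) = \<zero>\<^bsub>M P\<^esub>"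
    using fmap_eta_val[OF \<eta> P \<phi>] by simp
  then show ?thesis
    using module_minus_eq_zero[OF M_mod[OF P]] N0_eC[OF \<eta> P Inl_B0[OF r1.rc_in_Rep[OF FS'S[OF \<phi>]]]]
      N0_eC[OF \<eta> P Inr_B0[OF r2.rc_in_Rep[OF \<phi>]]] by blast
qed

lemma yk_C: "P \<in> C \<Longrightarrow> yk \<eta> P \<in> carrier (M P)"
  unfolding yk_def using N0_eC[OF \<eta> _ Inl_B0[OF r1.rc_in_Rep[OF idF]]] by blast

lemma yk_comp:
  assumes P: "P \<in> C" and Q: "Q \<in> C" and \<phi>: "\<phi> \<in> F P Q"
  shows "Mm P Q \<phi> (yk \<eta> Q) = yk \<eta> P"
proof (rule gen_compat[OF yk_C _ _ \<phi> P Q])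
  fix A B \<psi> assume A: "A \<in> C" and B: "B \<in> C" and \<psi>: "\<psi> \<in> F1 A B"
  show "Mm A B \<psi> (yk \<eta> B) = yk \<eta> A" unfolding yk_def by (rule GC1(2)[OF \<eta> A B \<psi>])
next
  fix A B \<psi> assume A: "A \<in> C" and B: "B \<in> C" and \<psi>: "\<psi> \<in> F2 A B"
  have As: "A \<in> subgrps G S'" and Bs: "B \<in> subgrps G S'" using fs_sub[OF F2fs \<psi>] by auto
  have "yk \<eta> A = \<eta> A (e (Inr (rep_cls F F2 S' A (idm A))))" unfolding yk_def by (rule k_eq[OF A idF2[OF As]])
  moreover have "yk \<eta> B = \<eta> B (e (Inr (rep_cls F F2 S' B (idm B))))" unfolding yk_def by (rule k_eq[OF B idF2[OF Bs]])
  ultimately show "Mm A B \<psi> (yk \<eta> B) = yk \<eta> A" using GC2(2)[OF \<eta> A B \<psi>] by simp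
qed

lemma yk_basis:
  assumes P: "P \<in> C" and zB: "w \<in> B0 P"
  shows "\<eta> P (e w) = yk \<eta> P"
proof (cases w)
  case (Inl c)
  then have c: "c \<in> Rep F F1 S P" using zB unfolding CX0_basis_def by auto
  define \<phi> where "\<phi> = (SOME \<phi>. \<phi> \<in> c)"
  have \<phi>F: "\<phi> \<in> F P S" and c\<phi>: "c = rep_cls F F1 S P \<phi>" using r1.Rep_some[OF c] unfolding \<phi>_def by auto
  have "\<eta> P (e w) = Mm P S \<phi> (yk \<eta> S)" unfolding Inl c\<phi> yk_def by (rule GC1(1)[OF \<eta> P \<phi>F])
  also have "\<dots> = yk \<eta> P" by (rule yk_comp[OF P SC \<phi>F])
  finally show ?thesis .
next
  case (Inr c)
  then have c: "c \<in> Rep F F2 S' P" using zB unfolding CX0_basis_def by auto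
  define \<phi> where "\<phi> = (SOME \<phi>. \<phi> \<in> c)"
  have \<phi>F: "\<phi> \<in> F P S'" and c\<phi>: "c = rep_cls F F2 S' P \<phi>" using r2.Rep_some[OF c] unfolding \<phi>_def by auto
  have "\<eta> P (e w) = \<eta> P (e (Inl (rep_cls F F1 S P \<phi>)))" unfolding Inr c\<phi> using k_eq[OF P \<phi>F] by simp
  also have "\<dots> = Mm P S \<phi> (yk \<eta> S)" unfolding yk_def by (rule GC1(1)[OF \<eta> P FS'S[OF \<phi>F]])
  also have "\<dots> = yk \<eta> P" by (rule yk_comp[OF P SC FS'S[OF \<phi>F]])
  finally show ?thesis .
qed

lemma yk_fix: "yk \<eta> S \<in> fixed_pts G C M Mmap F S"
  unfolding fixed_pts_def
proof (rule CollectI, rule exI[of _ "yk \<eta>"], intro conjI ballI impI refl)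
  fix P assume "P \<in> C" then show "yk \<eta> P \<in> carrier (M P)" by (rule yk_C)
next
  fix P Q \<rho> assume P: "P \<in> C" and Q: "Q \<in> C" and \<rho>: "\<rho> \<in> orb_hom G F P Q"
  then obtain \<phi> where "\<phi> \<in> F P Q" "\<rho> = orb_cls G P Q \<phi>" unfolding orb_hom_def by blast
  then show "Mmap P Q \<rho> (yk \<eta> Q) = yk \<eta> P" using yk_comp[OF P Q] by simp
qed

end

definition Kset where "Kset = {\<eta> \<in> N0. fst0 \<eta> = \<zero>\<^bsub>nm1\<^esub>}"

lemma Kset_D: "\<eta> \<in> Kset \<Longrightarrow> \<eta> \<in> N0" "\<eta> \<in> Kset \<Longrightarrow> \<forall>P\<in>C. \<forall>a\<in>carrier (free_mod R (B1 P)). \<eta> P (Fm P a) = \<zero>\<^bsub>M P\<^esub>"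
  unfolding Kset_def using kernel_iff by auto

lemma part1: "mod_iso R (submod nm0 Kset) (submod (M S) (fixed_pts G C M Mmap F S))"
proof -
  define h1 where "h1 = (\<lambda>\<eta>. yk \<eta> S)"
  have into: "h1 \<eta> \<in> fixed_pts G C M Mmap F S" if "\<eta> \<in> Kset" for \<eta>
    unfolding h1_def using yk_fix[OF Kset_D[OF that]] .
  have inj: "inj_on h1 Kset"
  proof (rule inj_onI)
    fix \<eta> \<mu> assume \<eta>K: "\<eta> \<in> Kset" and \<mu>K: "\<mu> \<in> Kset" and eq: "h1 \<eta> = h1 \<mu>"
    note \<eta> = Kset_D[OF \<eta>K] and \<mu> = Kset_D[OF \<mu>K]
    have yeq: "yk \<eta> P = yk \<mu> P" if P: "P \<in> C" for P
      using yk_comp[OF \<eta> P SC idF[OF P]] yk_comp[OF \<mu> P SC idF[OF P]] eq unfolding h1_def by simp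
    show "\<eta> = \<mu>"
      by (rule N0_unique[OF \<eta>(1) \<mu>(1)]) (use yk_basis[OF \<eta>] yk_basis[OF \<mu>] yeq in simp)
  qed
  have surj: "fixed_pts G C M Mmap F S \<subseteq> h1 ` Kset"
  proof
    fix x assume "x \<in> fixed_pts G C M Mmap F S"
    then obtain y where y: "x = y S" "\<forall>P\<in>C. P \<subseteq> S \<longrightarrow> y P \<in> carrier (M P)"
      "\<forall>P\<in>C. \<forall>Q\<in>C. P \<subseteq> S \<longrightarrow> Q \<subseteq> S \<longrightarrow> (\<forall>\<rho>\<in>orb_hom G F P Q. Mmap P Q \<rho> (y Q) = y P)"
      unfolding fixed_pts_def by blast
    have Psub: "P \<subseteq> S" if "P \<in> C" for P using subgrps_sub(1)[OF C_sub[OF that]] .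
    have yC: "\<forall>P\<in>C. \<forall>c\<in>B0 P. y P \<in> carrier (M P)" using y(2) Psub by blast
    have yN: "\<forall>P\<in>C. \<forall>Q\<in>C. \<forall>\<rho>\<in>F P Q. \<forall>c\<in>B0 Q. y P = Mm P Q \<rho> (y Q)"
    proof (intro ballI)
      fix P Q \<rho> c assume P: "P \<in> C" and Q: "Q \<in> C" and \<rho>: "\<rho> \<in> F P Q"
      have "orb_cls G P Q \<rho> \<in> orb_hom G F P Q" unfolding orb_hom_def using \<rho> by simp
      then show "y P = Mm P Q \<rho> (y Q)" using y(3) P Q Psub by metis
    qed
    define \<eta> where "\<eta> = mkNT B0 (\<lambda>P c. y P)"
    have \<eta>NT: "\<eta> \<in> N0" unfolding \<eta>_def CX0_eq
      by (rule mkNT_NT[where B=B0 and g="\<lambda>P Q \<rho>. g0 P Q \<rho>" and v="\<lambda>P c. y P"])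
        (use B0_fin g0_map yC yN in auto)
    have \<eta>b: "\<eta> P (e w) = y P" if "P \<in> C" "w \<in> B0 P" for P w
      unfolding \<eta>_def
      by (rule mkNT_basis[where B=B0 and g="\<lambda>P Q \<rho>. g0 P Q \<rho>" and v="\<lambda>P c. y P"])
        (use B0_fin g0_map yC yN that in auto)
    have ker: "\<forall>P\<in>C. \<forall>a\<in>carrier (free_mod R (B1 P)). \<eta> P (Fm P a) = \<zero>\<^bsub>M P\<^esub>"
    proof (intro ballI)
      fix P a assume P: "P \<in> C" and a: "a \<in> carrier (free_mod R (B1 P))"
      interpret N: module R "M P" by (rule M_mod[OF P])
      show "\<eta> P (Fm P a) = \<zero>\<^bsub>M P\<^esub>"
      proof (rule free_uniq[OF R M_mod[OF P] linear_map_comp[OF fmap_lin[OF P] N0_lin[OF \<eta>NT P]]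
            linear_map_zero_map[OF M_mod[OF P]] B1_fin'[OF P] _ a])
        fix d assume d: "d \<in> B1 P"
        have i1: "Inl (k1 P d) \<in> B0 P" using Inl_B0[OF k1_map[OF d]] .
        have i2: "Inr (k2 P d) \<in> B0 P" using Inr_B0[OF k2_map[OF d]] .
        show "\<eta> P (Fm P (e d)) = \<zero>\<^bsub>M P\<^esub>"
        proof -
          have "y P \<in> carrier (M P)" using y(2) P Psub[OF P] by blast
          then show ?thesis using eta_fmap[OF \<eta>NT P d] \<eta>b[OF P i1] \<eta>b[OF P i2] by (simp add: N.l_neg)
        qed
      qed
    qed
    have "\<eta> \<in> Kset" unfolding Kset_def using \<eta>NT ker kernel_iff by blast
    moreover have "h1 \<eta> = x" unfolding h1_def yk_def using \<eta>b[OF SC Inl_B0[OF r1.rc_in_Rep[OF idF[OF SC]]]] y(1) by simp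
    ultimately show "x \<in> h1 ` Kset" by blast
  qed
  have bij: "bij_betw h1 Kset (fixed_pts G C M Mmap F S)"
    unfolding bij_betw_def using inj into surj by blast
  have eC: "e (Inl (rep_cls F F1 S S (idm S))) \<in> carrier (free_mod R (B0 S))"
    using basis_vec_carrier[OF Rring Inl_B0[OF r1.rc_in_Rep[OF idF[OF SC]]]] .
  have lin: "linear_map R (submod nm0 Kset) (submod (M S) (fixed_pts G C M Mmap F S)) h1"
    unfolding linear_map_def submod_def
    using into eC SC by (auto simp: h1_def yk_def nm_add nm_smult)
  show ?thesis unfolding mod_iso_def using lin bij by (auto simp: submod_def)
qed

end

context mainctx
begin

abbreviation "d0 \<equiv> rep_cls F Fe S' S' (idm S')"
abbreviation "\<iota> \<equiv> idm S'"

lemma S'_subgrps': "S' \<in> subgrps G S'"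
  using S'_subgrps unfolding subgrps_def by simp

lemma iota_F2: "\<iota> \<in> F S' S'" using idF2[OF S'_subgrps'] .
lemma iota_F: "\<iota> \<in> F S' S" using idF[OF S'C] .

lemma d0_B1: "d0 \<in> B1 S'" using rce_B1[OF iota_F2] .
lemma ed0: "e d0 \<in> carrier (free_mod R (B1 S'))" using basis_vec_carrier[OF Rring d0_B1] .

definition h2 :: "('a set \<Rightarrow> (('a \<Rightarrow> 'a) set \<Rightarrow> 'r) \<Rightarrow> 'm) \<Rightarrow> 'm" where
  "h2 \<eta> = \<eta> S' (e d0)"

lemma h2_fix: "\<eta> \<in> N1 \<Longrightarrow> h2 \<eta> \<in> fixed_pts G C M Mmap Fe S'"
  unfolding h2_def using GCe(2) .

lemma h2_inj: "inj_on h2 N1"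
proof (rule inj_onI)
  fix \<eta> \<mu> assume \<eta>: "\<eta> \<in> N1" and \<mu>: "\<mu> \<in> N1" and eq: "h2 \<eta> = h2 \<mu>"
  show "\<eta> = \<mu>"
  proof (rule N1_unique[OF \<eta> \<mu>])
    fix P c assume P: "P \<in> C" and c: "c \<in> B1 P"
    obtain \<phi> where \<phi>: "\<phi> \<in> F P S'" "c = rep_cls F Fe S' P \<phi>" using B1_cases[OF c] by blast
    show "\<eta> P (e c) = \<mu> P (e c)"
      using GCe(1)[OF \<eta> P \<phi>(1)] GCe(1)[OF \<mu> P \<phi>(1)] eq \<phi>(2) unfolding h2_def by simp
  qed
qed

lemma vfixC:
  assumes rH: "repctx G F H TH" and THC: "TH \<in> C" and x: "x \<in> fixed_pts G C M Mmap H TH"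
  shows "\<forall>P\<in>C. \<forall>c\<in>Rep F H TH P. vfix TH x P c \<in> carrier (M P)"
  using WC[OF rH THC x] by blast

lemma vfixN:
  assumes rH: "repctx G F H TH" and THC: "TH \<in> C" and x: "x \<in> fixed_pts G C M Mmap H TH"
  shows "\<forall>P\<in>C. \<forall>Q\<in>C. \<forall>\<rho>\<in>F P Q. \<forall>c\<in>Rep F H TH Q.
     vfix TH x P (rep_pre F H TH P \<rho> c) = Mm P Q \<rho> (vfix TH x Q c)"
  using Wnat[OF rH THC x] by blast

lemma h2_surj: "fixed_pts G C M Mmap Fe S' \<subseteq> h2 ` N1"
proof
  fix x assume x: "x \<in> fixed_pts G C M Mmap Fe S'"
  define \<eta> where "\<eta> = mkNT B1 (vfix S' x)"
  have vC: "\<forall>P\<in>C. \<forall>c\<in>B1 P. vfix S' x P c \<in> carrier (M P)"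
    using vfixC[OF rce S'C x] unfolding CX1_basis_def .
  have vN: "\<forall>P\<in>C. \<forall>Q\<in>C. \<forall>\<rho>\<in>F P Q. \<forall>c\<in>B1 Q. vfix S' x P (g1 P Q \<rho> c) = Mm P Q \<rho> (vfix S' x Q c)"
    using vfixN[OF rce S'C x] unfolding CX1_basis_def .
  have \<eta>NT: "\<eta> \<in> N1" unfolding \<eta>_def CX1_eq
    by (rule mkNT_NT[where B=B1 and g="\<lambda>P Q \<rho>. g1 P Q \<rho>" and v="vfix S' x"])
      (use B1_fin g1_map vC vN in auto)
  have "\<eta> S' (e d0) = vfix S' x S' d0" unfolding \<eta>_def
    by (rule mkNT_basis[where B=B1 and g="\<lambda>P Q \<rho>. g1 P Q \<rho>" and v="vfix S' x"])
      (use B1_fin g1_map vC vN S'C d0_B1 in auto)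
  also have "\<dots> = x" by (rule Wid[OF rce S'C x])
  finally show "x \<in> h2 ` N1" using \<eta>NT unfolding h2_def by blast
qed

lemma h2_bij: "bij_betw h2 N1 (fixed_pts G C M Mmap Fe S')"
  unfolding bij_betw_def using h2_inj h2_surj h2_fix by blast

lemma fix_neg:
  assumes rH: "repctx G F H TH" and THC: "TH \<in> C" and x: "x \<in> fixed_pts G C M Mmap H TH"
  shows "\<ominus>\<^bsub>M TH\<^esub> x \<in> fixed_pts G C M Mmap H TH"
proof -
  interpret r: repctx G F H TH by (rule rH)
  obtain y where y: "x = y TH" "\<forall>P\<in>C. P \<subseteq> TH \<longrightarrow> y P \<in> carrier (M P)"
    "\<forall>P\<in>C. \<forall>Q\<in>C. P \<subseteq> TH \<longrightarrow> Q \<subseteq> TH \<longrightarrow> (\<forall>\<rho>\<in>orb_hom G H P Q. Mmap P Q \<rho> (y Q) = y P)"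
    using x unfolding fixed_pts_def by blast
  define y' where "y' = (\<lambda>P. \<ominus>\<^bsub>M P\<^esub> y P)"
  have "\<forall>P\<in>C. P \<subseteq> TH \<longrightarrow> y' P \<in> carrier (M P)"
    unfolding y'_def using y(2) M_mod module.axioms(2) abelian_group.a_inv_closed by metis
  moreover have "\<forall>P\<in>C. \<forall>Q\<in>C. P \<subseteq> TH \<longrightarrow> Q \<subseteq> TH \<longrightarrow> (\<forall>\<rho>\<in>orb_hom G H P Q. Mmap P Q \<rho> (y' Q) = y' P)"
  proof (intro ballI impI)
    fix P Q \<rho> assume P: "P \<in> C" and Q: "Q \<in> C" and PT: "P \<subseteq> TH" and QT: "Q \<subseteq> TH" and \<rho>: "\<rho> \<in> orb_hom G H P Q"
    obtain \<phi> where \<phi>: "\<phi> \<in> H P Q" "\<rho> = orb_cls G P Q \<phi>" using \<rho> unfolding orb_hom_def by blast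
    have "Mmap P Q \<rho> (y' Q) = \<ominus>\<^bsub>M P\<^esub> Mmap P Q \<rho> (y Q)"
      unfolding y'_def \<phi>(2)
      by (rule linear_map_minus[OF M_mod[OF Q] M_mod[OF P] Mm_lin[OF P Q r.HF'[OF \<phi>(1)]]]) (use y(2) Q QT in blast)
    then show "Mmap P Q \<rho> (y' Q) = y' P" using y(3) P Q PT QT \<rho> unfolding y'_def by simp
  qed
  ultimately show ?thesis unfolding fixed_pts_def using y(1) unfolding y'_def
    by (intro CollectI exI[of _ y']) (simp add: y'_def)
qed

lemma fst0_val:
  assumes \<eta>: "\<eta> \<in> N0"
  shows "h2 (fst0 \<eta>) = \<ominus>\<^bsub>M S'\<^esub> \<eta> S' (e (Inl (rep_cls F F1 S S' \<iota>))) \<oplus>\<^bsub>M S'\<^esub> \<eta> S' (e (Inr (rep_cls F F2 S' S' \<iota>)))"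
  unfolding h2_def fstar_def using S'C ed0 fmap_eta_val[OF \<eta> S'C iota_F2] by simp

definition Nset where
  "Nset = set_add (M S') (Mmap S' S (orb_cls G S' S \<iota>) ` fixed_pts G C M Mmap F1 S) (fixed_pts G C M Mmap F2 S')"

lemma image_fst0: "h2 ` (fst0 ` N0) = Nset"
proof
  show "h2 ` fst0 ` N0 \<subseteq> Nset"
  proof
    fix u assume "u \<in> h2 ` fst0 ` N0"
    then obtain \<eta> where \<eta>: "\<eta> \<in> N0" and u: "u = h2 (fst0 \<eta>)" by blast
    define x1 where "x1 = \<eta> S (e (Inl (rep_cls F F1 S S (idm S))))"
    define x2 where "x2 = \<eta> S' (e (Inr (rep_cls F F2 S' S' \<iota>)))"
    have x1f: "x1 \<in> fixed_pts G C M Mmap F1 S" unfolding x1_def by (rule GC1(3)[OF \<eta>])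
    have x2f: "x2 \<in> fixed_pts G C M Mmap F2 S'" unfolding x2_def by (rule GC2(3)[OF \<eta>])
    have x1C: "x1 \<in> carrier (M S)" by (rule x_C[OF rc1 SC x1f])
    have "\<eta> S' (e (Inl (rep_cls F F1 S S' \<iota>))) = Mm S' S \<iota> x1" unfolding x1_def by (rule GC1(1)[OF \<eta> S'C iota_F])
    also have "\<ominus>\<^bsub>M S'\<^esub> \<dots> = Mm S' S \<iota> (\<ominus>\<^bsub>M S\<^esub> x1)"
      by (rule linear_map_minus[OF M_mod[OF SC] M_mod[OF S'C] Mm_lin[OF S'C SC iota_F] x1C, symmetric])
    finally have e1: "\<ominus>\<^bsub>M S'\<^esub> \<eta> S' (e (Inl (rep_cls F F1 S S' \<iota>))) = Mm S' S \<iota> (\<ominus>\<^bsub>M S\<^esub> x1)" .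
    have "u = Mm S' S \<iota> (\<ominus>\<^bsub>M S\<^esub> x1) \<oplus>\<^bsub>M S'\<^esub> x2" unfolding u fst0_val[OF \<eta>] e1 x2_def ..
    moreover have "\<ominus>\<^bsub>M S\<^esub> x1 \<in> fixed_pts G C M Mmap F1 S" by (rule fix_neg[OF rc1 SC x1f])
    ultimately show "u \<in> Nset" unfolding Nset_def set_add_def' using x2f by blast
  qed
next
  show "Nset \<subseteq> h2 ` fst0 ` N0"
  proof
    fix u assume "u \<in> Nset"
    then obtain x1 x2 where x1f: "x1 \<in> fixed_pts G C M Mmap F1 S" and x2f: "x2 \<in> fixed_pts G C M Mmap F2 S'"
      and u: "u = Mm S' S \<iota> x1 \<oplus>\<^bsub>M S'\<^esub> x2"
      unfolding Nset_def set_add_def' by blast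
    define x1' where "x1' = \<ominus>\<^bsub>M S\<^esub> x1"
    have x1'f: "x1' \<in> fixed_pts G C M Mmap F1 S" unfolding x1'_def by (rule fix_neg[OF rc1 SC x1f])
    define v where "v = (\<lambda>P w. case w of Inl c \<Rightarrow> vfix S x1' P c | Inr c \<Rightarrow> vfix S' x2 P c)"
    have vC: "\<forall>P\<in>C. \<forall>w\<in>B0 P. v P w \<in> carrier (M P)"
      using vfixC[OF rc1 SC x1'f] vfixC[OF rc2 S'C x2f] unfolding v_def CX0_basis_def by auto
    have vN: "\<forall>P\<in>C. \<forall>Q\<in>C. \<forall>\<rho>\<in>F P Q. \<forall>w\<in>B0 Q. v P (g0 P Q \<rho> w) = Mm P Q \<rho> (v Q w)"
      using vfixN[OF rc1 SC x1'f] vfixN[OF rc2 S'C x2f] unfolding v_def CX0_basis_def by auto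
    define \<eta> where "\<eta> = mkNT B0 v"
    have \<eta>NT: "\<eta> \<in> N0" unfolding \<eta>_def CX0_eq
      by (rule mkNT_NT[where B=B0 and g="\<lambda>P Q \<rho>. g0 P Q \<rho>" and v=v]) (use B0_fin g0_map vC vN in auto)
    have \<eta>b: "\<eta> P (e w) = v P w" if "P \<in> C" "w \<in> B0 P" for P w
      unfolding \<eta>_def
      by (rule mkNT_basis[where B=B0 and g="\<lambda>P Q \<rho>. g0 P Q \<rho>" and v=v]) (use B0_fin g0_map vC vN that in auto)
    have 1: "\<eta> S' (e (Inl (rep_cls F F1 S S' \<iota>))) = Mm S' S \<iota> x1'"
      using \<eta>b[OF S'C Inl_B0[OF r1.rc_in_Rep[OF iota_F]]] Wv[OF rc1 SC x1'f S'C iota_F] unfolding v_def by simp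
    have 2: "\<eta> S' (e (Inr (rep_cls F F2 S' S' \<iota>))) = x2"
      using \<eta>b[OF S'C Inr_B0[OF r2.rc_in_Rep[OF iota_F2]]] Wv[OF rc2 S'C x2f S'C iota_F2]
        Mm_id[OF S'C x_C[OF rc2 S'C x2f]] unfolding v_def by simp
    have x1C: "x1 \<in> carrier (M S)" by (rule x_C[OF rc1 SC x1f])
    interpret NS: module R "M S" by (rule M_mod[OF SC])
    interpret NS': module R "M S'" by (rule M_mod[OF S'C])
    have "\<ominus>\<^bsub>M S'\<^esub> Mm S' S \<iota> x1' = Mm S' S \<iota> x1"
      unfolding x1'_def
      using linear_map_minus[OF M_mod[OF SC] M_mod[OF S'C] Mm_lin[OF S'C SC iota_F] NS.a_inv_closed[OF x1C]]
        NS.minus_minus[OF x1C] by simp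
    then have e3: "\<ominus>\<^bsub>M S'\<^esub> Mm S' S \<iota> x1' = Mm S' S \<iota> x1" .
    have "h2 (fst0 \<eta>) = u" unfolding fst0_val[OF \<eta>NT] 1 2 e3 u ..
    then show "u \<in> h2 ` fst0 ` N0" using \<eta>NT by blast
  qed
qed

end

context mainctx
begin

lemma fst0_NT:
  assumes \<eta>: "\<eta> \<in> N0"
  shows "fst0 \<eta> \<in> N1"
  unfolding nat_trans_def
proof (intro CollectI conjI ballI)
  show "fst0 \<eta> \<in> extensional C" unfolding fstar_def by simp
next
  fix P assume P: "P \<in> C"
  show "fst0 \<eta> P \<in> extensional (carrier (free_mod R (B1 P)))" unfolding fstar_def using P by simp
  show "linear_map R (free_mod R (B1 P)) (M P) (fst0 \<eta> P)"
    by (rule linear_map_cong_free[OF Rring linear_map_comp[OF fmap_lin[OF P] N0_lin[OF \<eta> P]]])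
      (use P in \<open>simp add: fstar_def\<close>)
next
  fix P Q \<rho> a assume P: "P \<in> C" and Q: "Q \<in> C" and \<rho>: "\<rho> \<in> F P Q" and a: "a \<in> carrier (free_mod R (B1 Q))"
  have gm: "g1 P Q \<rho> \<in> B1 Q \<rightarrow> B1 P" using g1_map P Q \<rho> by blast
  have fa: "free_map R (B1 Q) (g1 P Q \<rho>) a \<in> carrier (free_mod R (B1 P))"
    by (rule fm_carrier[OF Rring B1_fin'[OF Q] gm a])
  have l1: "linear_map R (free_mod R (B1 Q)) (M P) (\<lambda>a. \<eta> P (Fm P (free_map R (B1 Q) (g1 P Q \<rho>) a)))"
    by (rule linear_map_comp[OF fm_linear[OF Rring B1_fin'[OF Q] gm] linear_map_comp[OF fmap_lin[OF P] N0_lin[OF \<eta> P]]])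
  have l2: "linear_map R (free_mod R (B1 Q)) (M P) (\<lambda>a. Mm P Q \<rho> (\<eta> Q (Fm Q a)))"
    by (rule linear_map_comp[OF linear_map_comp[OF fmap_lin[OF Q] N0_lin[OF \<eta> Q]] Mm_lin[OF P Q \<rho>]])
  have main: "\<eta> P (Fm P (free_map R (B1 Q) (g1 P Q \<rho>) a)) = Mm P Q \<rho> (\<eta> Q (Fm Q a))"
  proof (rule free_uniq[OF R M_mod[OF P] l1 l2 B1_fin'[OF Q] _ a])
    fix d assume d: "d \<in> B1 Q"
    obtain \<phi> where \<phi>: "\<phi> \<in> F Q S'" "d = rep_cls F Fe S' Q \<phi>" using B1_cases[OF d] by blast
    have c\<phi>: "comp_on P \<phi> \<rho> \<in> F P S'" by (rule fs_comp[OF Ffs \<rho> \<phi>(1)])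
    have "free_map R (B1 Q) (g1 P Q \<rho>) (e d) = e (g1 P Q \<rho> d)" by (rule fm_basis[OF Rring B1_fin'[OF Q] d])
    also have "g1 P Q \<rho> d = rep_cls F Fe S' P (comp_on P \<phi> \<rho>)" unfolding \<phi>(2) by (rule re.rep_pre_rc[OF \<phi>(1) \<rho>])
    finally have fe: "free_map R (B1 Q) (g1 P Q \<rho>) (e d) = e (rep_cls F Fe S' P (comp_on P \<phi> \<rho>))" .
    have L: "\<eta> P (Fm P (free_map R (B1 Q) (g1 P Q \<rho>) (e d)))
        = \<ominus>\<^bsub>M P\<^esub> \<eta> P (e (Inl (rep_cls F F1 S P (comp_on P \<phi> \<rho>)))) \<oplus>\<^bsub>M P\<^esub> \<eta> P (e (Inr (rep_cls F F2 S' P (comp_on P \<phi> \<rho>))))"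
      unfolding fe by (rule fmap_eta_val[OF \<eta> P c\<phi>])
    have i1: "rep_cls F F1 S Q \<phi> \<in> Rep F F1 S Q" by (rule r1.rc_in_Rep[OF FS'S[OF \<phi>(1)]])
    have i2: "rep_cls F F2 S' Q \<phi> \<in> Rep F F2 S' Q" by (rule r2.rc_in_Rep[OF \<phi>(1)])
    have c1: "\<eta> Q (e (Inl (rep_cls F F1 S Q \<phi>))) \<in> carrier (M Q)" using u1C[OF \<eta>] Q i1 by blast
    have c2: "\<eta> Q (e (Inr (rep_cls F F2 S' Q \<phi>))) \<in> carrier (M Q)" using u2C[OF \<eta>] Q i2 by blast
    interpret NQ: module R "M Q" by (rule M_mod[OF Q])
    note lm = linear_mapD[OF Mm_lin[OF P Q \<rho>]]
    have "Mm P Q \<rho> (\<eta> Q (Fm Q (e d)))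
        = Mm P Q \<rho> (\<ominus>\<^bsub>M Q\<^esub> \<eta> Q (e (Inl (rep_cls F F1 S Q \<phi>))) \<oplus>\<^bsub>M Q\<^esub> \<eta> Q (e (Inr (rep_cls F F2 S' Q \<phi>))))"
      unfolding \<phi>(2) fmap_eta_val[OF \<eta> Q \<phi>(1)] ..
    also have "\<dots> = \<ominus>\<^bsub>M P\<^esub> Mm P Q \<rho> (\<eta> Q (e (Inl (rep_cls F F1 S Q \<phi>)))) \<oplus>\<^bsub>M P\<^esub> Mm P Q \<rho> (\<eta> Q (e (Inr (rep_cls F F2 S' Q \<phi>))))"
      unfolding lm(2)[OF NQ.a_inv_closed[OF c1] c2]
        linear_map_minus[OF M_mod[OF Q] M_mod[OF P] Mm_lin[OF P Q \<rho>] c1] ..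
    also have "Mm P Q \<rho> (\<eta> Q (e (Inl (rep_cls F F1 S Q \<phi>)))) = \<eta> P (e (Inl (rep_cls F F1 S P (comp_on P \<phi> \<rho>))))"
      using u1N[OF \<eta>] P Q \<rho> i1 r1.rep_pre_rc[OF FS'S[OF \<phi>(1)] \<rho>] by metis
    also have "Mm P Q \<rho> (\<eta> Q (e (Inr (rep_cls F F2 S' Q \<phi>)))) = \<eta> P (e (Inr (rep_cls F F2 S' P (comp_on P \<phi> \<rho>))))"
      using u2N[OF \<eta>] P Q \<rho> i2 r2.rep_pre_rc[OF \<phi>(1) \<rho>] by metis
    finally show "\<eta> P (Fm P (free_map R (B1 Q) (g1 P Q \<rho>) (e d))) = Mm P Q \<rho> (\<eta> Q (Fm Q (e d)))"
      using L by simp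
  qed
  show "fst0 \<eta> P (CX1_map R F Fe S' P Q \<rho> a) = Mm P Q \<rho> (fst0 \<eta> Q a)"
    unfolding CX1_eq fstar_def using P Q a fa main by simp
qed

lemma N1_add':
  assumes "\<eta> \<in> N1" "\<mu> \<in> N1"
  shows "\<eta> \<oplus>\<^bsub>nm1\<^esub> \<mu> \<in> N1"
  unfolding nm_add using N1_add[OF assms] .

lemma h2_add: "h2 (\<eta> \<oplus>\<^bsub>nm1\<^esub> \<mu>) = h2 \<eta> \<oplus>\<^bsub>M S'\<^esub> h2 \<mu>"
  unfolding h2_def nm_add using S'C ed0 by simp

lemma h2_smult: "h2 (r \<odot>\<^bsub>nm1\<^esub> \<eta>) = r \<odot>\<^bsub>M S'\<^esub> h2 \<eta>"
  unfolding h2_def nm_smult using S'C ed0 by simp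

lemma h2_coset: "h2 ` (a_r_coset nm1 Y \<eta>) = a_r_coset (M S') (h2 ` Y) (h2 \<eta>)"
  unfolding a_r_coset_def' image_UN by (simp add: h2_add SUP_image comp_def)

lemma coset_sub:
  assumes \<eta>: "\<eta> \<in> N1"
  shows "a_r_coset nm1 (fst0 ` N0) \<eta> \<subseteq> N1"
proof
  fix x assume "x \<in> a_r_coset nm1 (fst0 ` N0) \<eta>"
  then obtain \<zeta> where \<zeta>: "\<zeta> \<in> N0" and x: "x = fst0 \<zeta> \<oplus>\<^bsub>nm1\<^esub> \<eta>" unfolding a_r_coset_def' by blast
  show "x \<in> N1" unfolding x by (rule N1_add'[OF fst0_NT[OF \<zeta>] \<eta>])
qed

lemma submod_coset: "a_r_coset (submod A Y) N x = a_r_coset A N x"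
  unfolding a_r_coset_def' by (simp add: submod_def)

lemma submod_set_add: "set_add (submod A Y) U V = set_add A U V"
  unfolding set_add_def' by (simp add: submod_def)

lemma part2:
  "mod_iso R (quot_mod nm1 (fst0 ` N0))
     (quot_mod (submod (M S') (fixed_pts G C M Mmap Fe S')) Nset)"
proof -
  let ?Im = "fst0 ` N0"
  let ?FE = "fixed_pts G C M Mmap Fe S'"
  define \<Phi> where "\<Phi> = (\<lambda>Y. h2 ` Y)"
  have cQ1: "carrier (quot_mod nm1 ?Im) = (\<lambda>\<eta>. a_r_coset nm1 ?Im \<eta>) ` N1"
    unfolding quot_mod_def A_RCOSETS_def' nm_carrier by auto
  have cQ2: "carrier (quot_mod (submod (M S') ?FE) Nset) = (\<lambda>x. a_r_coset (M S') Nset x) ` ?FE"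
    unfolding quot_mod_def A_RCOSETS_def' submod_coset by (auto simp: submod_def)
  have \<Phi>c: "\<Phi> (a_r_coset nm1 ?Im \<eta>) = a_r_coset (M S') Nset (h2 \<eta>)" for \<eta>
    unfolding \<Phi>_def h2_coset image_fst0 ..
  have bij: "bij_betw \<Phi> (carrier (quot_mod nm1 ?Im)) (carrier (quot_mod (submod (M S') ?FE) Nset))"
    unfolding bij_betw_def
  proof
    show "inj_on \<Phi> (carrier (quot_mod nm1 ?Im))"
    proof (rule inj_onI)
      fix Y Z assume Y: "Y \<in> carrier (quot_mod nm1 ?Im)" and Z: "Z \<in> carrier (quot_mod nm1 ?Im)"
        and eq: "\<Phi> Y = \<Phi> Z"
      obtain \<eta> where \<eta>: "\<eta> \<in> N1" "Y = a_r_coset nm1 ?Im \<eta>" using Y cQ1 by auto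
      obtain \<mu> where \<mu>: "\<mu> \<in> N1" "Z = a_r_coset nm1 ?Im \<mu>" using Z cQ1 by auto
      have "Y \<subseteq> N1" "Z \<subseteq> N1" using coset_sub \<eta> \<mu> by auto
      then show "Y = Z" using eq inj_on_image_eq_iff[OF h2_inj] unfolding \<Phi>_def by blast
    qed
    show "\<Phi> ` carrier (quot_mod nm1 ?Im) = carrier (quot_mod (submod (M S') ?FE) Nset)"
      unfolding cQ1 cQ2 image_image \<Phi>c
      using bij_betw_imp_surj_on[OF h2_bij] by (metis image_image)
  qed
  have lin: "linear_map R (quot_mod nm1 ?Im) (quot_mod (submod (M S') ?FE) Nset) \<Phi>"
    unfolding linear_map_def
  proof (intro conjI ballI)
    show "\<Phi> \<in> carrier (quot_mod nm1 ?Im) \<rightarrow> carrier (quot_mod (submod (M S') ?FE) Nset)"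
      using bij unfolding bij_betw_def by blast
  next
    fix Y Z
    show "\<Phi> (Y \<oplus>\<^bsub>quot_mod nm1 ?Im\<^esub> Z) = \<Phi> Y \<oplus>\<^bsub>quot_mod (submod (M S') ?FE) Nset\<^esub> \<Phi> Z"
      unfolding quot_mod_def \<Phi>_def
      by (simp add: set_add_def' h2_add image_UN submod_def)
  next
    fix r Y
    have "\<Phi> (r \<odot>\<^bsub>quot_mod nm1 ?Im\<^esub> Y) = (\<Union>x\<in>Y. h2 ` a_r_coset nm1 ?Im (r \<odot>\<^bsub>nm1\<^esub> x))"
      unfolding quot_mod_def \<Phi>_def by (simp add: image_UN)
    also have "\<dots> = (\<Union>x\<in>Y. a_r_coset (M S') Nset (r \<odot>\<^bsub>M S'\<^esub> h2 x))"
      unfolding h2_coset image_fst0 h2_smult ..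
    also have "\<dots> = r \<odot>\<^bsub>quot_mod (submod (M S') ?FE) Nset\<^esub> \<Phi> Y"
      unfolding quot_mod_def \<Phi>_def by (simp add: submod_coset image_image) (simp add: submod_def)
    finally show "\<Phi> (r \<odot>\<^bsub>quot_mod nm1 ?Im\<^esub> Y) = r \<odot>\<^bsub>quot_mod (submod (M S') ?FE) Nset\<^esub> \<Phi> Y" .
  qed
  show ?thesis unfolding mod_iso_def using lin bij by blast
qed

end

theorem lemma3p11:
  fixes G :: "'a monoid" and p :: nat and S' :: "'a set"
    and R :: "'r ring"
    and F1 F2 Fe F :: "'a set \<Rightarrow> 'a set \<Rightarrow> ('a \<Rightarrow> 'a) set"
    and C :: "'a set set"
    and M :: "'a set \<Rightarrow> ('r, 'm) module"
    and Mmap :: "'a set \<Rightarrow> 'a set \<Rightarrow> ('a \<Rightarrow> 'a) set \<Rightarrow> 'm \<Rightarrow> 'm"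
  assumes "cring R"
    and "group G" and "Factorial_Ring.prime p" and "p_group G p (carrier G)"
    and "subgroup S' G"
    and "fusion_system G (carrier G) F1"
    and "fusion_system G S' F2"
    and "fusion_system G S' Fe"
    and "subsystem Fe F1" and "subsystem Fe F2"
    and F_def: "F = generated_fs G F1 F2"
    and "C \<subseteq> subgrps G (carrier G)" and "S' \<in> C"
    and "\<forall>P\<in>C. \<forall>\<phi>\<in>F P (carrier G). \<phi> ` P \<in> C"
    and "\<forall>P\<in>C. \<forall>Q. subgroup Q G \<and> P \<subseteq> Q \<longrightarrow> Q \<in> C"
    and "orbit_functor G F C R M Mmap"
  shows
    "mod_iso R
       (submod (nat_mod G F C R (CX0_basis F F1 F2 (carrier G) S') (CX0_map R F F1 F2 (carrier G) S') M Mmap)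
          {\<eta> \<in> nat_trans G F C R (CX0_basis F F1 F2 (carrier G) S') (CX0_map R F F1 F2 (carrier G) S') M Mmap.
             fstar R F F1 F2 Fe (carrier G) S' C \<eta>
               = \<zero>\<^bsub>nat_mod G F C R (CX1_basis F Fe S') (CX1_map R F Fe S') M Mmap\<^esub>})
       (submod (M (carrier G)) (fixed_pts G C M Mmap F (carrier G)))
   \<and> mod_iso R
       (quot_mod (nat_mod G F C R (CX1_basis F Fe S') (CX1_map R F Fe S') M Mmap)
          (fstar R F F1 F2 Fe (carrier G) S' C `
             nat_trans G F C R (CX0_basis F F1 F2 (carrier G) S') (CX0_map R F F1 F2 (carrier G) S') M Mmap))
       (quot_mod (submod (M S') (fixed_pts G C M Mmap Fe S'))
          (set_add (M S')
             (Mmap S' (carrier G) (orb_cls G S' (carrier G) (restrict id S'))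
                ` fixed_pts G C M Mmap F1 (carrier G))
             (fixed_pts G C M Mmap F2 S')))"
proof -
  have fin: "finite (carrier G)" using assms(4) unfolding p_group_def by blast
  interpret mc: mainctx G S' R F1 F2 Fe F C M Mmap
    by (rule mainctx.intro) (use assms fin in auto)
  show ?thesis using mc.part1 mc.part2 unfolding mc.Kset_def mc.Nset_def by simp
qed

end
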